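(* Let $V$ be an infinite-dimensional complex Hilbert space. Then in the bosonic Fock space $S[V]$, the domain $\mathcal{D}[N^{\frac{1}{2}}]$ is properly contained in the maximal common domain $\bigcap_{v \in V} \big(\mathcal{D}[c(v)] \cap \mathcal{D}[a(v)]\big)$ of all creators and annihilators.
   Context: Let $V$ be a complex Hilbert space with inner product $\langle \cdot \vert \cdot \rangle$ (antilinear in the first slot). Let $SV = \bigoplus_{n \geq 0} S^n V$ be the (algebraic) symmetric algebra, with inner product making the $S^n V$ mutually perpendicular and $\langle x_1 \cdots x_n \vert y_1 \cdots y_n \rangle = \sum_{p} \prod_{j=1}^n \langle x_j \vert y_{p(j)} \rangle$ (sum over permutations $p$ of $\{1,\dots,n\}$). The bosonic Fock space $S[V] = \bigoplus_{n \geq 0} S^n[V]$ is the Hilbert space completion, $S^n[V]$ being the closure of $S^n V$. Let $SV'$ be the space of all antilinear functionals $SV \to \mathbf{C}$; $SV$ embeds in $SV'$ via $\phi \mapsto \langle \cdot \vert \phi \rangle$, and $S[V]$ is identified with the subspace of bounded antilinear functionals. For $v \in V$, the creator $c(v)$ on $SV$ is multiplication by $v$, and the annihilator $a(v)$ on $SV$ is the derivation with $a(v)\mathbf{1} = 0$ and $a(v)(v_1 \cdots v_n) = \sum_{j=1}^n \langle v \vert v_j \rangle v_1 \cdots \widehat{v_j} \cdots v_n$. They extend to $SV'$ by $[c(v)\Phi](\psi) = \Phi[a(v)\psi]$ and $[a(v)\Phi](\psi) = \Phi[c(v)\psi]$ for $\psi \in SV$. The operators in Fock space have domains $\mathcal{D}[c(v)]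 = \{\Phi \in S[V] : c(v)\Phi \in S[V]\}$ and $\mathcal{D}[a(v)] = \{\Phi \in S[V] : a(v)\Phi \in S[V]\}$ (these coincide). The number operator $N$ acts as $nI$ on $S^n[V]$; writing $\Phi = \sum_{n \geq 0} \Phi_n$ with $\Phi_n \in S^n[V]$, $\mathcal{D}[N^{\frac{1}{2}}] = \{\Phi \in S[V] : \sum_{n \geq 0} n \Vert \Phi_n \Vert^2 < \infty\}$. *)

theory Defs
  imports "HOL-Analysis.Analysis" "HOL-Combinatorics.Permutations"
begin

class complex_inner_space = ab_group_add +
  fixes scaleC :: "complex \<Rightarrow> 'a \<Rightarrow> 'a" (infixr \<open>*\<^sub>C\<close> 75)
    and cinner :: "'a \<Rightarrow> 'a \<Rightarrow> complex"
  assumes scaleC_add_right: "a *\<^sub>C (x + y) = a *\<^sub>C x + a *\<^sub>C y"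
    and scaleC_add_left: "(a + b) *\<^sub>C x = a *\<^sub>C x + b *\<^sub>C x"
    and scaleC_scaleC: "a *\<^sub>C (b *\<^sub>C x) = (a * b) *\<^sub>C x"
    and scaleC_one: "1 *\<^sub>C x = x"
    and cinner_cnj_commute: "cinner x y = cnj (cinner y x)"
    and cinner_add_right: "cinner x (y + z) = cinner x y + cinner x z"
    and cinner_scaleC_right: "cinner x (a *\<^sub>C y) = a * cinner x y"
    and cinner_ge_zero: "0 \<le> Re (cinner x x)"
    and cinner_eq_zero_iff: "cinner x x = 0 \<longleftrightarrow> x = 0"

definition cnorm :: "'a::complex_inner_space \<Rightarrow> real" where
  "cnorm x = sqrt (Re (cinner x x))"

class complex_hilbert_space = complex_inner_space +
  assumes cauchy_convergent:
    "(\<forall>e>0. \<exists>N::nat. \<forall>m\<ge>N. \<forall>n\<ge>N. sqrt (Re (cinner (X m - X n) (X m - X n))) < e) \<Longrightarrow>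
     (\<exists>L. \<forall>e>0. \<exists>N. \<forall>n\<ge>N. sqrt (Re (cinner (X n - L) (X n - L))) < e)"

definition cspan :: "'a::complex_inner_space set \<Rightarrow> 'a set" where
  "cspan S = {\<Sum>s\<in>T. c s *\<^sub>C s | T c. finite T \<and> T \<subseteq> S}"

definition infinite_dimensional :: "'a::complex_inner_space itself \<Rightarrow> bool" where
  "infinite_dimensional _ \<longleftrightarrow> (\<forall>S::'a set. finite S \<longrightarrow> cspan S \<noteq> UNIV)"

text \<open>An element of SV is represented by a finite formal linear combination of
monomials v_1 \<cdots> v_n, i.e. a list of pairs (coefficient, list of factors).\<close>

type_synonym 'v sv = "(complex \<times> 'v list) list"

definition mono_ip :: "'v::complex_inner_space list \<Rightarrow> 'v list \<Rightarrow> complex" where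
  "mono_ip xs ys =
     (if length xs = length ys then
        (\<Sum>p\<in>{p. p permutes {..<length xs}}. \<Prod>j<length xs. cinner (xs ! j) (ys ! p j))
      else 0)"

definition sv_ip :: "'v::complex_inner_space sv \<Rightarrow> 'v sv \<Rightarrow> complex" where
  "sv_ip \<phi> \<psi> = (\<Sum>(c, xs)\<leftarrow>\<phi>. \<Sum>(d, ys)\<leftarrow>\<psi>. cnj c * d * mono_ip xs ys)"

definition sv_norm :: "'v::complex_inner_space sv \<Rightarrow> real" where
  "sv_norm \<psi> = sqrt (Re (sv_ip \<psi> \<psi>))"

text \<open>An antilinear functional on SV is determined by its values on monomials;
these values form a function on lists that is symmetric and antilinear in each
slot (universal property of the symmetric powers).  Conversely each such function
defines a unique antilinear functional on SV.  So SV' is represented by:\<close>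

definition sv_antidual :: "('v::complex_inner_space list \<Rightarrow> complex) \<Rightarrow> bool" where
  "sv_antidual F \<longleftrightarrow>
     (\<forall>xs ys. mset xs = mset ys \<longrightarrow> F xs = F ys) \<and>
     (\<forall>xs ys a b x y. F (xs @ (a *\<^sub>C x + b *\<^sub>C y) # ys) =
                       cnj a * F (xs @ x # ys) + cnj b * F (xs @ y # ys))"

definition sv_eval :: "('v list \<Rightarrow> complex) \<Rightarrow> 'v sv \<Rightarrow> complex" where
  "sv_eval F \<psi> = (\<Sum>(c, xs)\<leftarrow>\<psi>. cnj c * F xs)"

text \<open>Bounded antilinear functionals = elements of the Fock space S[V].\<close>
definition fock :: "('v::complex_inner_space list \<Rightarrow> complex) set" where
  "fock = {F. sv_antidual F \<and> (\<exists>C. \<forall>\<psi>. cmod (sv_eval F \<psi>) \<le> C * sv_norm \<psi>)}"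

text \<open>[c(v)F](\<psi>) = F(a(v)\<psi>) and [a(v)F](\<psi>) = F(c(v)\<psi>), on monomials.\<close>
definition creator :: "'v::complex_inner_space \<Rightarrow> ('v list \<Rightarrow> complex) \<Rightarrow> ('v list \<Rightarrow> complex)" where
  "creator v F xs = (\<Sum>j<length xs. cinner (xs ! j) v * F (take j xs @ drop (Suc j) xs))"

definition annihilator :: "'v::complex_inner_space \<Rightarrow> ('v list \<Rightarrow> complex) \<Rightarrow> ('v list \<Rightarrow> complex)" where
  "annihilator v F xs = F (v # xs)"

definition dom_creator :: "'v::complex_inner_space \<Rightarrow> ('v list \<Rightarrow> complex) set" where
  "dom_creator v = {F \<in> fock. creator v F \<in> fock}"

definition dom_annihilator :: "'v::complex_inner_space \<Rightarrow> ('v list \<Rightarrow> complex) set" where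
  "dom_annihilator v = {F \<in> fock. annihilator v F \<in> fock}"

text \<open>Norm of the degree-n component \<Phi>_n of \<Phi> (as a functional on S^n V).\<close>
definition comp_norm :: "('v::complex_inner_space list \<Rightarrow> complex) \<Rightarrow> nat \<Rightarrow> real" where
  "comp_norm F n = Sup {cmod (sv_eval F \<psi>) | \<psi>.
      (\<forall>(c, xs)\<in>set \<psi>. length xs = n) \<and> sv_norm \<psi> \<le> 1}"

definition dom_N_half :: "('v::complex_inner_space list \<Rightarrow> complex) set" where
  "dom_N_half = {F \<in> fock. summable (\<lambda>n. real n * (comp_norm F n)\<^sup>2)}"

end

theory Submission
  imports Defs
begin


lemma cinner_add_left: "cinner (x + y) (z::'a::complex_inner_space) = cinner x z + cinner y z"
proof -
  have "cinner (x + y) z = cnj (cinner z (x + y))" by (rule cinner_cnj_commute)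
  also have "\<dots> = cnj (cinner z x) + cnj (cinner z y)" by (simp add: cinner_add_right)
  also have "\<dots> = cinner x z + cinner y z" using cinner_cnj_commute[of x z] cinner_cnj_commute[of y z] by simp
  finally show ?thesis .
qed
lemma cinner_scaleC_left: "cinner (a *\<^sub>C x) (y::'a::complex_inner_space) = cnj a * cinner x y"
proof -
  have "cinner (a *\<^sub>C x) (y::'a::complex_inner_space) = cnj (cinner y (a *\<^sub>C x))" by (rule cinner_cnj_commute)
  also have "\<dots> = cnj a * cnj (cinner y x)" by (simp add: cinner_scaleC_right)
  also have "\<dots> = cnj a * cinner x y" using cinner_cnj_commute[of x y] by simp
  finally show ?thesis .
qed
lemma cinner_zero_right[simp]: "cinner (x::'a::complex_inner_space) 0 = 0"
  using cinner_add_right[of x 0 0] by simp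
lemma cinner_zero_left[simp]: "cinner 0 (x::'a::complex_inner_space) = 0"
  using cinner_add_left[of 0 0 x] by simp
lemma cinner_minus_right: "cinner (x::'a::complex_inner_space) (- y) = - cinner x y"
proof -
  have "cinner x y + cinner x (-y) = 0" using cinner_add_right[of x y "-y"] by simp
  thus ?thesis by (simp add: add_eq_0_iff)
qed
lemma cinner_minus_left: "cinner (- x) (y::'a::complex_inner_space) = - cinner x y"
proof -
  have "cinner x y + cinner (-x) y = 0" using cinner_add_left[of x "-x" y] by simp
  thus ?thesis by (simp add: add_eq_0_iff)
qed
lemma cinner_diff_right: "cinner (x::'a::complex_inner_space) (y - z) = cinner x y - cinner x z"
  using cinner_add_right[of x y "-z"] cinner_minus_right[of x z] by (simp only: diff_conv_add_uminus)
lemma cinner_diff_left: "cinner (x - y) (z::'a::complex_inner_space) = cinner x z - cinner y z"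
  using cinner_add_left[of x "-y" z] cinner_minus_left[of y z] by (simp only: diff_conv_add_uminus)
lemma cinner_sum_right: "cinner (x::'a::complex_inner_space) (\<Sum>i\<in>A. f i) = (\<Sum>i\<in>A. cinner x (f i))"
  proof (induction A rule: infinite_finite_induct)
  case (insert a A) thus ?case by (simp add: cinner_add_right)
qed simp_all
lemma cinner_sum_left: "cinner (\<Sum>i\<in>A. f i) x = (\<Sum>i\<in>A. cinner (f i) x)"
  proof (induction A rule: infinite_finite_induct)
  case (insert a A) thus ?case by (simp add: cinner_add_left)
qed simp_all
lemma scaleC_zero_right[simp]: "a *\<^sub>C (0::'a::complex_inner_space) = 0"
  using scaleC_add_right[of a 0 0] by simp
lemma scaleC_zero_left[simp]: "0 *\<^sub>C (x::'a::complex_inner_space) = 0"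
  using scaleC_add_left[of 0 0 x] by simp
lemma cinner_self_real: "cinner (x::'a::complex_inner_space) x = complex_of_real (Re (cinner x x))"
proof -
  have "cinner x x = cnj (cinner x x)" by (rule cinner_cnj_commute)
  hence "Im (cinner x x) = 0" by (simp add: complex_eq_iff)
  thus ?thesis by (simp add: complex_eq_iff)
qed

lemma cinner_self_eq: "cinner (x::'a::complex_inner_space) x = complex_of_real (cnorm x ^ 2)"
  using cinner_self_real[of x] cinner_ge_zero[of x] by (simp add: cnorm_def)
lemma cnorm_ge0: "cnorm (x::'a::complex_inner_space) \<ge> 0" by (simp add: cnorm_def cinner_ge_zero)
lemma cnorm_eq_0: "cnorm x = 0 \<longleftrightarrow> x = 0"
proof -
  have "cnorm x = 0 \<longleftrightarrow> cinner x x = 0" using cinner_self_eq[of x] by simp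
  thus ?thesis using cinner_eq_zero_iff by blast
qed


definition dl :: "nat \<Rightarrow> 'a list \<Rightarrow> 'a list" where
  "dl j xs = take j xs @ drop (Suc j) xs"

lemma length_dl[simp]: "j < length xs \<Longrightarrow> length (dl j xs) = length xs - 1"
  by (simp add: dl_def)

lemma mset_dl: "j < length xs \<Longrightarrow> mset (dl j xs) = mset xs - {#xs ! j#}"
proof -
  assume j: "j < length xs"
  have "xs = take j xs @ xs ! j # drop (Suc j) xs" using j by (simp add: id_take_nth_drop)
  hence "mset xs = mset (take j xs @ drop (Suc j) xs) + {#xs ! j#}"
    by (metis add_mset_add_single mset.simps(2) mset_append union_mset_add_mset_right)
  thus ?thesis by (simp add: dl_def)
qed

lemma mono_ip_len: "length xs \<noteq> length ys \<Longrightarrow> mono_ip xs ys = 0"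
  by (simp add: mono_ip_def)

lemma mono_ip_Nil[simp]: "mono_ip [] [] = 1"
  by (simp add: mono_ip_def)

lemma mono_ip_perm1:
  assumes "mset xs = mset xs'"
  shows "mono_ip xs ys = mono_ip xs' ys"
proof (cases "length xs = length ys")
  case False
  have "length xs' = length xs" using assms by (metis size_mset)
  thus ?thesis using False by (simp add: mono_ip_def)
next
  case True
  have L: "length xs' = length xs" using assms by (metis size_mset)
  obtain s where s: "s permutes {..<length xs}" "permute_list s xs = xs'"
    using mset_eq_permutation[of xs' xs] assms by metis
  let ?n = "length xs"
  have "mono_ip xs' ys = (\<Sum>p\<in>{p. p permutes {..<?n}}. \<Prod>j<?n. cinner (xs ! s j) (ys ! p j))"
    unfolding mono_ip_def using L True s(1)
    by (auto simp: s(2)[symmetric] permute_list_nth intro!: sum.cong prod.cong)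
  also have "\<dots> = (\<Sum>p\<in>{p. p permutes {..<?n}}. \<Prod>j<?n. cinner (xs ! j) (ys ! p (inv s j)))"
    using prod.permutes_inv[OF s(1), of "\<lambda>a j. cinner (xs ! a) (ys ! p j)" for p] by simp
  also have "\<dots> = (\<Sum>p\<in>{p. p permutes {..<?n}}. \<Prod>j<?n. cinner (xs ! j) (ys ! p j))"
    using sum_permutations_compose_right[OF permutes_inv[OF s(1)],
        of "\<lambda>p. \<Prod>j<?n. cinner (xs ! j) (ys ! p j)"] by simp
  also have "\<dots> = mono_ip xs ys" unfolding mono_ip_def using True by simp
  finally show ?thesis by simp
qed

lemma mono_ip_perm2:
  assumes "mset ys = mset ys'"
  shows "mono_ip xs ys = mono_ip xs ys'"
proof (cases "length xs = length ys")
  case False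
  have "length ys' = length ys" using assms by (metis size_mset)
  thus ?thesis using False by (simp add: mono_ip_def)
next
  case True
  have L: "length ys' = length ys" using assms by (metis size_mset)
  obtain s where s: "s permutes {..<length ys}" "permute_list s ys = ys'"
    using mset_eq_permutation[of ys' ys] assms by metis
  let ?n = "length xs"
  have "mono_ip xs ys' = (\<Sum>p\<in>{p. p permutes {..<?n}}. \<Prod>j<?n. cinner (xs ! j) (ys ! s (p j)))"
  proof -
    have h: "\<And>p j. p permutes {..<length ys} \<Longrightarrow> j < length ys \<Longrightarrow> permute_list s ys ! p j = ys ! s (p j)"
    proof -
      fix p j assume p: "p permutes {..<length ys}" and j: "j < length ys"
      have "p j < length ys" using permutes_in_image[OF p, of j] j by simp
      thus "permute_list s ys ! p j = ys ! s (p j)" by (rule permute_list_nth[OF s(1)])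
    qed
    show ?thesis unfolding mono_ip_def using L True s(1) h
    by (auto intro!: sum.cong prod.cong simp: s(2)[symmetric])
  qed
  also have "\<dots> = (\<Sum>p\<in>{p. p permutes {..<?n}}. \<Prod>j<?n. cinner (xs ! j) (ys ! p j))"
    using setum_permutations_compose_left[OF s(1)[folded True],
        of "\<lambda>p. \<Prod>j<?n. cinner (xs ! j) (ys ! p j)"] by simp
  also have "\<dots> = mono_ip xs ys" unfolding mono_ip_def using True by simp
  finally show ?thesis by simp
qed

lemma mono_ip_cnj: "mono_ip ys xs = cnj (mono_ip xs ys)"
proof (cases "length xs = length ys")
  case False thus ?thesis by (simp add: mono_ip_def)
next
  case True
  let ?n = "length xs"
  have "cnj (mono_ip xs ys) = (\<Sum>p\<in>{p. p permutes {..<?n}}. \<Prod>j<?n. cinner (ys ! p j) (xs ! j))"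
    unfolding mono_ip_def using True
    by (simp add: cinner_cnj_commute[of "xs ! j" for j])
  also have "\<dots> = (\<Sum>p\<in>{p. p permutes {..<?n}}. \<Prod>j<?n. cinner (ys ! j) (xs ! inv p j))"
    by (rule sum.cong[OF refl]) (use prod.permutes_inv[of _ "{..<?n}" "\<lambda>a j. cinner (ys ! a) (xs ! j)"] in auto)
  also have "\<dots> = (\<Sum>p\<in>{p. p permutes {..<?n}}. \<Prod>j<?n. cinner (ys ! j) (xs ! p j))"
    using sum_permutations_inverse[of "\<lambda>p. \<Prod>j<?n. cinner (ys ! j) (xs ! p j)" "{..<?n}"] by simp
  also have "\<dots> = mono_ip ys xs" unfolding mono_ip_def using True by simp
  finally show ?thesis by simp
qed


lemma mono_ip_snoc:
  assumes len: "length ys = Suc (length xs)"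
  shows "mono_ip (xs @ [x]) ys = (\<Sum>b<Suc (length xs). cinner x (ys!b) * mono_ip xs (take (length xs) (ys[b := ys ! length xs])))"
proof -
  define n where "n = length xs"
  have U: "{..<Suc n} = insert n {..<n}" by auto
  define f where "f p = (\<Prod>j<Suc n. cinner ((xs @ [x]) ! j) (ys ! p j))" for p
  have "mono_ip (xs @ [x]) ys = sum f {p. p permutes {..<Suc n}}"
    unfolding mono_ip_def f_def n_def using len by simp
  also have "\<dots> = (\<Sum>b\<in>insert n {..<n}. \<Sum>q\<in>{p. p permutes {..<n}}. f (Transposition.transpose n b \<circ> q))"
    unfolding U by (rule sum_over_permutations_insert) auto
  also have "\<dots> = (\<Sum>b<Suc n. cinner x (ys!b) * mono_ip xs (take n (ys[b := ys ! n])))"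
    unfolding U[symmetric]
  proof (rule sum.cong[OF refl])
    fix b assume b: "b \<in> {..<Suc n}"
    define ys' where "ys' = take n (ys[b := ys ! n])"
    have lys': "length ys' = n" using len by (simp add: ys'_def n_def)
    have key: "ys ! (Transposition.transpose n b k) = ys' ! k" if k: "k < n" for k
      using k b len unfolding ys'_def n_def
      by (cases "k = b") (auto simp: transpose_def nth_list_update)
    have "f (Transposition.transpose n b \<circ> q) = cinner x (ys ! b) * (\<Prod>j<n. cinner (xs ! j) (ys' ! q j))"
      if q: "q permutes {..<n}" for q
    proof -
      have qn: "q n = n" using permutes_not_in[OF q] by simp
      have qj: "q j < n" if "j < n" for j using permutes_in_image[OF q, of j] that by simp
      have "f (Transposition.transpose n b \<circ> q) = cinner ((xs @ [x]) ! n) (ys ! Transposition.transpose n b (q n)) *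
               (\<Prod>j<n. cinner ((xs @ [x]) ! j) (ys ! Transposition.transpose n b (q j)))"
        unfolding f_def by (simp add: mult.commute)
      also have "\<dots> = cinner x (ys ! b) * (\<Prod>j<n. cinner (xs ! j) (ys' ! q j))"
        using qn qj key by (auto simp: n_def nth_append intro!: prod.cong)
      finally show ?thesis .
    qed
    hence "(\<Sum>q\<in>{p. p permutes {..<n}}. f (Transposition.transpose n b \<circ> q)) =
       (\<Sum>q\<in>{p. p permutes {..<n}}. cinner x (ys ! b) * (\<Prod>j<n. cinner (xs ! j) (ys' ! q j)))"
      by (intro sum.cong) auto
    also have "\<dots> = cinner x (ys!b) * mono_ip xs ys'"
      unfolding mono_ip_def using lys' by (simp add: n_def sum_distrib_left)
    finally show "(\<Sum>q\<in>{p. p permutes {..<n}}. f (Transposition.transpose n b \<circ> q)) = cinner x (ys!b) * mono_ip xs (take n (ys[b := ys ! n]))"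
      by (simp add: ys'_def)
  qed
  finally show ?thesis by (simp add: n_def)
qed

lemma mset_take_update:
  assumes len: "length ys = Suc n" and b: "b < Suc n"
  shows "mset (take n (ys[b := ys ! n])) = mset (dl b ys)"
proof (cases "b = n")
  case True thus ?thesis using len by (simp add: dl_def)
next
  case False
  hence bn: "b < n" using b by simp
  have ys: "ys = take n ys @ [ys ! n]" using len
    using take_Suc_conv_app_nth[of n ys] by simp
  have "take n (ys[b := ys ! n]) = (take n ys)[b := ys ! n]" by (simp add: take_update_swap)
  hence "mset (take n (ys[b := ys ! n])) = add_mset (ys ! n) (mset (take n ys) - {#ys ! b#})"
    using bn len by (simp add: mset_update)
  also have "\<dots> = mset ys - {#ys ! b#}"
  proof -
    have "ys ! b \<in># mset (take n ys)" using bn len by (simp add: in_set_conv_nth) (metis nth_take length_take min_absorb2 le_SucI order_refl len)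
    moreover have "mset ys = add_mset (ys ! n) (mset (take n ys))" using ys by (metis mset.simps(2) mset_append add_mset_add_single mset.simps(1) union_commute add_mset_commute union_mset_add_mset_right)
    ultimately show ?thesis by simp
  qed
  also have "\<dots> = mset (dl b ys)" using b len by (simp add: mset_dl)
  finally show ?thesis .
qed

lemma mono_ip_Cons:
  "mono_ip (x # xs) ys = (\<Sum>j<length ys. cinner x (ys ! j) * mono_ip xs (dl j ys))"
proof (cases "length ys = Suc (length xs)")
  case True
  have "mono_ip (x # xs) ys = mono_ip (xs @ [x]) ys" by (rule mono_ip_perm1) simp
  also have "\<dots> = (\<Sum>b<Suc (length xs). cinner x (ys!b) * mono_ip xs (take (length xs) (ys[b := ys ! length xs])))"
    by (rule mono_ip_snoc[OF True])
  also have "\<dots> = (\<Sum>j<length ys. cinner x (ys ! j) * mono_ip xs (dl j ys))"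
    unfolding True by (intro sum.cong refl arg_cong[where f="\<lambda>t. _ * t"] mono_ip_perm2 mset_take_update[OF True]) simp
  finally show ?thesis .
next
  case False
  have "mono_ip xs (dl j ys) = 0" if "j < length ys" for j
    using False that by (intro mono_ip_len) auto
  thus ?thesis using False by (simp add: mono_ip_len)
qed

lemma mono_ip_Cons2:
  "mono_ip xs (y # ys) = (\<Sum>i<length xs. cinner (xs ! i) y * mono_ip (dl i xs) ys)"
proof -
  have "mono_ip xs (y # ys) = cnj (mono_ip (y # ys) xs)" by (rule mono_ip_cnj)
  also have "\<dots> = (\<Sum>i<length xs. cnj (cinner y (xs ! i)) * cnj (mono_ip ys (dl i xs)))"
    by (simp add: mono_ip_Cons)
  also have "\<dots> = (\<Sum>i<length xs. cinner (xs ! i) y * mono_ip (dl i xs) ys)"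
    by (simp add: mono_ip_cnj[of ys] cinner_cnj_commute[of "xs ! i" y for i])
  finally show ?thesis .
qed


lemma sl_concat: "sum_list (map f (concat xss)) = sum_list (map (\<lambda>xs. sum_list (map f xs)) xss)"
  by (induction xss) auto

lemma sl_sum_swap: "sum_list (map (\<lambda>x. \<Sum>k\<in>A. g x k) xs) = (\<Sum>k\<in>A. sum_list (map (\<lambda>x. g x k) xs))"
  by (induction xs) (auto simp: sum.distrib)

lemma sl_upt: "sum_list (map f [0..<n]) = (\<Sum>j<n. f j)"
  by (simp add: interv_sum_list_conv_sum_set_nat atLeast0LessThan)

definition cre :: "'v \<Rightarrow> 'v sv \<Rightarrow> 'v sv" where
  "cre v \<psi> = map (\<lambda>(c, xs). (c, v # xs)) \<psi>"

definition ann :: "'v::complex_inner_space \<Rightarrow> 'v sv \<Rightarrow> 'v sv" where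
  "ann v \<psi> = concat (map (\<lambda>(c, xs). map (\<lambda>j. (c * cinner v (xs ! j), dl j xs)) [0..<length xs]) \<psi>)"

definition sc :: "complex \<Rightarrow> 'v sv \<Rightarrow> 'v sv" where
  "sc t \<psi> = map (\<lambda>(c, xs). (t * c, xs)) \<psi>"

lemma cnj_sl: "cnj (sum_list (map f xs)) = sum_list (map (\<lambda>x. cnj (f x)) xs)"
  by (induction xs) auto

lemma sl_zero: "(\<And>x. x \<in> set xs \<Longrightarrow> f x = 0) \<Longrightarrow> sum_list (map f xs) = (0::'a::comm_monoid_add)"
  by (induction xs) auto

lemma sv_ip_Nil1[simp]: "sv_ip [] \<psi> = 0" and sv_ip_Nil2[simp]: "sv_ip \<psi> [] = 0"
  by (simp_all add: sv_ip_def case_prod_unfold)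

lemma sv_ip_append1: "sv_ip (a @ b) \<psi> = sv_ip a \<psi> + sv_ip b \<psi>"
  by (simp add: sv_ip_def)

lemma sv_ip_append2: "sv_ip \<psi> (a @ b) = sv_ip \<psi> a + sv_ip \<psi> b"
  by (simp add: sv_ip_def case_prod_unfold sum_list_addf)

lemma sv_ip_Cons1: "sv_ip ((c, xs) # a) \<psi> = (\<Sum>(d, ys)\<leftarrow>\<psi>. cnj c * d * mono_ip xs ys) + sv_ip a \<psi>"
  by (simp add: sv_ip_def)

lemma term_cnj: "cnj c * d * mono_ip xs ys = cnj (cnj d * c * mono_ip ys xs)"
  by (simp add: mono_ip_cnj[of ys xs])

lemma sv_ip_cnj: "sv_ip \<psi> \<phi> = cnj (sv_ip \<phi> \<psi>)"
proof -
  have "sv_ip \<psi> \<phi> = (\<Sum>(c, xs)\<leftarrow>\<psi>. \<Sum>(d, ys)\<leftarrow>\<phi>. cnj (cnj d * c * mono_ip ys xs))"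
  proof -
    have "(\<lambda>(d, ys). cnj c * d * mono_ip xs ys) = (\<lambda>(d, ys). cnj (cnj d * c * mono_ip ys xs))" for c and xs :: "'a list"
      by (rule ext) (simp only: case_prod_unfold, rule term_cnj)
    thus ?thesis unfolding sv_ip_def by (simp only:)
  qed
  also have "\<dots> = (\<Sum>(d, ys)\<leftarrow>\<phi>. \<Sum>(c, xs)\<leftarrow>\<psi>. cnj (cnj d * c * mono_ip ys xs))"
  proof (induction \<psi>)
    case (Cons a \<psi>) thus ?case by (simp add: case_prod_unfold sum_list_addf)
  qed (simp add: case_prod_unfold)
  also have "\<dots> = cnj (sv_ip \<phi> \<psi>)"
    unfolding sv_ip_def by (simp add: cnj_sl case_prod_unfold o_def)
  finally show ?thesis .
qed


lemma cnj_cinner: "cnj (cinner x y) = cinner y x"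
  by (metis cinner_cnj_commute)

lemma sv_ip_ann2: "sv_ip \<phi> (ann v \<psi>) =
  (\<Sum>(c, xs)\<leftarrow>\<phi>. \<Sum>(d, ys)\<leftarrow>\<psi>. cnj c * d * (\<Sum>j<length ys. cinner v (ys ! j) * mono_ip xs (dl j ys)))"
  unfolding sv_ip_def ann_def
  by (simp add: sl_concat o_def case_prod_unfold sl_upt sum_distrib_left mult.assoc)

lemma sv_ip_crean2: "sv_ip \<phi> (cre w (ann v \<psi>)) =
  (\<Sum>(c, xs)\<leftarrow>\<phi>. \<Sum>(d, ys)\<leftarrow>\<psi>. cnj c * d * (\<Sum>j<length ys. cinner v (ys ! j) * mono_ip xs (w # dl j ys)))"
  unfolding sv_ip_def ann_def cre_def
  by (simp add: sl_concat o_def case_prod_unfold sl_upt sum_distrib_left mult.assoc)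

lemma sv_ip_cre1: "sv_ip (cre v \<phi>) \<psi> =
  (\<Sum>(c, xs)\<leftarrow>\<phi>. \<Sum>(d, ys)\<leftarrow>\<psi>. cnj c * d * mono_ip (v # xs) ys)"
  unfolding sv_ip_def cre_def by (simp add: o_def case_prod_unfold)

lemma sv_ip_cre_ann: "sv_ip (cre v \<phi>) \<psi> = sv_ip \<phi> (ann v \<psi>)"
  unfolding sv_ip_cre1 sv_ip_ann2 by (simp add: mono_ip_Cons)

lemma sv_ip_ann_cre: "sv_ip (ann v \<phi>) \<psi> = sv_ip \<phi> (cre v \<psi>)"
  by (metis sv_ip_cnj sv_ip_cre_ann)

lemma sv_ip_sc1: "sv_ip (sc t \<phi>) \<psi> = cnj t * sv_ip \<phi> \<psi>"
  unfolding sv_ip_def sc_def by (simp add: o_def case_prod_unfold sum_list_const_mult mult.assoc)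

lemma sv_ip_sc2: "sv_ip \<phi> (sc t \<psi>) = t * sv_ip \<phi> \<psi>"
  using sv_ip_sc1[of t \<psi> \<phi>] by (metis sv_ip_cnj complex_cnj_cnj complex_cnj_mult)

lemma sv_eval_append: "sv_eval F (a @ b) = sv_eval F a + sv_eval F b"
  by (simp add: sv_eval_def)

lemma sv_eval_sc: "sv_eval F (sc t \<psi>) = cnj t * sv_eval F \<psi>"
  unfolding sv_eval_def sc_def by (simp add: o_def case_prod_unfold sum_list_const_mult mult.assoc)

lemma sv_eval_cre: "sv_eval F (cre v \<psi>) = sv_eval (annihilator v F) \<psi>"
  unfolding sv_eval_def cre_def annihilator_def by (simp add: o_def case_prod_unfold)

lemma sv_eval_ann: "sv_eval F (ann v \<psi>) = sv_eval (creator v F) \<psi>"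
  unfolding sv_eval_def ann_def creator_def
  by (simp add: sl_concat o_def case_prod_unfold sl_upt sum_distrib_left mult.assoc dl_def cnj_cinner)


lemma scaleC_sum_right: "a *\<^sub>C (\<Sum>i\<in>A. f i) = (\<Sum>i\<in>A. a *\<^sub>C (f i :: 'v::complex_inner_space))"
proof (induction A rule: infinite_finite_induct)
  case (insert x A) thus ?case by (simp add: scaleC_add_right)
qed simp_all

lemma cinner_sum_scale_right: "cinner (x::'v::complex_inner_space) (\<Sum>i\<in>A. c i *\<^sub>C f i) = (\<Sum>i\<in>A. c i * cinner x (f i))"
  by (simp add: cinner_sum_right cinner_scaleC_right)

lemma cinner_sum_scale_left: "cinner (\<Sum>i\<in>A. c i *\<^sub>C f i) (x::'v::complex_inner_space) = (\<Sum>i\<in>A. cnj (c i) * cinner (f i) x)"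
  by (simp add: cinner_sum_left cinner_scaleC_left)

definition onl :: "'v::complex_inner_space list \<Rightarrow> bool" where
  "onl es \<longleftrightarrow> (\<forall>i<length es. \<forall>j<length es. cinner (es!i) (es!j) = (if i = j then 1 else 0))"

definition proj :: "'v::complex_inner_space list \<Rightarrow> 'v \<Rightarrow> 'v" where
  "proj es x = (\<Sum>k<length es. cinner (es!k) x *\<^sub>C es!k)"

definition inspan :: "'v::complex_inner_space list \<Rightarrow> 'v \<Rightarrow> bool" where
  "inspan es x \<longleftrightarrow> proj es x = x"

lemma proj_inner:
  assumes "onl es" "i < length es"
  shows "cinner (es!i) (proj es x) = cinner (es!i) x"
proof -
  have "cinner (es!i) (proj es x) = (\<Sum>k<length es. cinner (es!k) x * cinner (es!i) (es!k))"
    unfolding proj_def by (rule cinner_sum_scale_right)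
  also have "\<dots> = (\<Sum>k<length es. if k = i then cinner (es!k) x else 0)"
    using assms unfolding onl_def by (intro sum.cong) auto
  also have "\<dots> = cinner (es!i) x" using assms(2) by simp
  finally show ?thesis .
qed

lemma proj_snoc: "proj (zs @ [y]) x = proj zs x + cinner y x *\<^sub>C y"
proof -
  have "(\<Sum>k<length zs. cinner ((zs @ [y]) ! k) x *\<^sub>C (zs @ [y]) ! k) = proj zs x"
    unfolding proj_def by (intro sum.cong) (auto simp: nth_append)
  thus ?thesis unfolding proj_def by simp
qed

lemma proj_append: "proj (es @ r) x = proj es x + proj r x"
proof (induction r rule: rev_induct)
  case Nil thus ?case by (simp add: proj_def)
next
  case (snoc y r)
  have "proj (es @ r @ [y]) x = proj (es @ r) x + cinner y x *\<^sub>C y"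
    using proj_snoc[of "es @ r"] by simp
  moreover have "proj (r @ [y]) x = proj r x + cinner y x *\<^sub>C y" by (rule proj_snoc)
  ultimately show ?case using snoc by (simp add: add.assoc)
qed


lemma onl_snoc:
  assumes "onl es" "cinner e e = 1" "\<And>i. i < length es \<Longrightarrow> cinner (es!i) e = 0"
  shows "onl (es @ [e])"
  unfolding onl_def
proof (intro allI impI)
  fix i j assume i: "i < length (es @ [e])" and j: "j < length (es @ [e])"
  have ce: "cinner e (es!i) = 0" if "i < length es" for i
    using assms(3)[OF that] cinner_cnj_commute[of e "es!i"] by simp
  show "cinner ((es @ [e]) ! i) ((es @ [e]) ! j) = (if i = j then 1 else 0)"
    using i j assms(1,2) assms(3) ce unfolding onl_def
    by (cases "i < length es"; cases "j < length es") (auto simp: nth_append)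
qed

lemma onl_prefix: "onl (es @ r) \<Longrightarrow> onl es"
  unfolding onl_def
proof (intro allI impI)
  fix i j assume h: "\<forall>i<length (es @ r). \<forall>j<length (es @ r). cinner ((es @ r) ! i) ((es @ r) ! j) = (if i = j then 1 else 0)"
    and i: "i < length es" and j: "j < length es"
  have "cinner ((es @ r) ! i) ((es @ r) ! j) = (if i = j then 1 else 0)" using h i j by simp
  thus "cinner (es ! i) (es ! j) = (if i = j then 1 else 0)" using i j by (simp add: nth_append)
qed

lemma inspan_extend:
  assumes "onl (es @ r)" "inspan es x"
  shows "inspan (es @ r) x"
proof -
  have "cinner (r!k) x = 0" if k: "k < length r" for k
  proof -
    have "cinner (r!k) x = cinner (r!k) (proj es x)" using assms(2) by (simp add: inspan_def)
    also have "\<dots> = (\<Sum>j<length es. cinner (es!j) x * cinner (r!k) (es!j))"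
      unfolding proj_def by (rule cinner_sum_scale_right)
    also have "\<dots> = 0"
    proof (rule sum.neutral, intro ballI)
      fix j assume j: "j \<in> {..<length es}"
      have "cinner ((es @ r) ! (length es + k)) ((es @ r) ! j) = 0"
      proof -
        have "length es + k < length (es @ r)" "j < length (es @ r)" using j k by auto
        hence "cinner ((es @ r) ! (length es + k)) ((es @ r) ! j) = (if length es + k = j then 1 else 0)"
          using assms(1) unfolding onl_def by blast
        thus ?thesis using j by simp
      qed
      moreover have "(es @ r) ! (length es + k) = r ! k" by (simp add: nth_append)
      moreover have "(es @ r) ! j = es ! j" using j by (simp add: nth_append)
      ultimately show "cinner (es!j) x * cinner (r!k) (es!j) = 0" by simp
    qed
    finally show ?thesis .
  qed
  hence "proj r x = 0" unfolding proj_def by simp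
  thus ?thesis using assms(2) by (simp add: inspan_def proj_append)
qed

lemma gs_step:
  assumes "onl es"
  shows "\<exists>r. onl (es @ r) \<and> inspan (es @ r) w"
proof (cases "proj es w = w")
  case True thus ?thesis using assms by (intro exI[of _ "[]"]) (simp add: inspan_def)
next
  case False
  define y where "y = w - proj es w"
  have y0: "y \<noteq> 0" using False by (simp add: y_def)
  define n where "n = cnorm y"
  have n0: "n > 0" using y0 cnorm_ge0[of y] cnorm_eq_0[of y] by (simp add: n_def)
  define e where "e = complex_of_real (1 / n) *\<^sub>C y"
  have yy: "cinner y y = complex_of_real (n^2)" by (simp add: n_def cinner_self_eq)
  have ey: "cinner (es!i) y = 0" if "i < length es" for i
    using proj_inner[OF assms that, of w] by (simp add: y_def cinner_diff_right)
  have ee: "cinner e e = 1"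
    using n0 by (simp add: e_def cinner_scaleC_left cinner_scaleC_right yy power2_eq_square)
  have ore: "cinner (es!i) e = 0" if "i < length es" for i
    using ey[OF that] by (simp add: e_def cinner_scaleC_right)
  have on: "onl (es @ [e])" by (rule onl_snoc[OF assms ee ore])
  have ep: "cinner e (proj es w) = 0"
  proof -
    have "cinner e (proj es w) = (\<Sum>k<length es. cinner (es!k) w * cinner e (es!k))"
      unfolding proj_def by (rule cinner_sum_scale_right)
    also have "\<dots> = 0"
    proof (rule sum.neutral, intro ballI)
      fix k assume "k \<in> {..<length es}"
      hence "cinner (es!k) e = 0" using ore by simp
      hence "cinner e (es!k) = 0" using cinner_cnj_commute[of e "es!k"] by simp
      thus "cinner (es!k) w * cinner e (es!k) = 0" by simp
    qed
    finally show ?thesis .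
  qed
  have wy: "w = y + proj es w" by (simp add: y_def)
  have "cinner e w = cinner e y"
    using ep by (subst wy) (simp add: cinner_add_right)
  also have "\<dots> = complex_of_real n" using n0
    by (simp add: e_def cinner_scaleC_left yy power2_eq_square)
  finally have ew: "cinner e w = complex_of_real n" .
  have "cinner e w *\<^sub>C e = (complex_of_real n * complex_of_real (1/n)) *\<^sub>C y"
    by (simp only: ew, simp only: e_def scaleC_scaleC)
  also have "\<dots> = y" using n0 by (simp add: scaleC_one)
  finally have "cinner e w *\<^sub>C e = y" .
  hence "proj (es @ [e]) w = w" by (simp add: proj_snoc y_def)
  thus ?thesis using on by (intro exI[of _ "[e]"]) (simp add: inspan_def)
qed

lemma gs:
  assumes "onl es"
  shows "\<exists>r. onl (es @ r) \<and> (\<forall>w\<in>set ws. inspan (es @ r) w)"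
  using assms
proof (induction ws arbitrary: es)
  case Nil thus ?case by (intro exI[of _ "[]"]) simp
next
  case (Cons w ws)
  obtain r1 where r1: "onl (es @ r1)" "inspan (es @ r1) w" using gs_step[OF Cons.prems] by blast
  obtain r2 where r2: "onl (es @ r1 @ r2)" "\<forall>w\<in>set ws. inspan (es @ r1 @ r2) w"
    using Cons.IH[OF r1(1)] by auto
  have "inspan (es @ r1 @ r2) w" using inspan_extend[of "es @ r1" r2 w] r1 r2 by simp
  thus ?case using r2 by (intro exI[of _ "r1 @ r2"]) auto
qed


definition hom :: "nat \<Rightarrow> 'v sv \<Rightarrow> bool" where
  "hom n \<psi> \<longleftrightarrow> (\<forall>(c, xs)\<in>set \<psi>. length xs = n)"

definition vecs :: "'v sv \<Rightarrow> 'v list" where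
  "vecs \<psi> = concat (map snd \<psi>)"

lemma mono_lin2:
  "mono_ip xs ((\<Sum>k\<in>A. a k *\<^sub>C f k) # zs) = (\<Sum>k\<in>A. a k * mono_ip xs (f k # zs))"
proof -
  have "mono_ip xs ((\<Sum>k\<in>A. a k *\<^sub>C f k) # zs) =
        (\<Sum>i<length xs. \<Sum>k\<in>A. a k * cinner (xs ! i) (f k) * mono_ip (dl i xs) zs)"
    by (simp add: mono_ip_Cons2 cinner_sum_scale_right sum_distrib_right)
  also have "\<dots> = (\<Sum>k\<in>A. \<Sum>i<length xs. a k * cinner (xs ! i) (f k) * mono_ip (dl i xs) zs)"
    by (rule sum.swap)
  also have "\<dots> = (\<Sum>k\<in>A. a k * mono_ip xs (f k # zs))"
    by (simp add: mono_ip_Cons2 sum_distrib_left mult.assoc)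
  finally show ?thesis .
qed

lemma num_mono:
  assumes "onl es" "\<And>j. j < length ys \<Longrightarrow> inspan es (ys ! j)"
  shows "(\<Sum>k<length es. \<Sum>j<length ys. cinner (es!k) (ys!j) * mono_ip xs ((es!k) # dl j ys))
         = of_nat (length ys) * mono_ip xs ys"
proof -
  have "(\<Sum>k<length es. \<Sum>j<length ys. cinner (es!k) (ys!j) * mono_ip xs ((es!k) # dl j ys))
      = (\<Sum>j<length ys. \<Sum>k<length es. cinner (es!k) (ys!j) * mono_ip xs ((es!k) # dl j ys))"
    by (rule sum.swap)
  also have "\<dots> = (\<Sum>j<length ys. mono_ip xs (proj es (ys!j) # dl j ys))"
    unfolding proj_def by (simp add: mono_lin2)
  also have "\<dots> = (\<Sum>j<length ys. mono_ip xs ys)"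
  proof (rule sum.cong[OF refl])
    fix j assume j: "j \<in> {..<length ys}"
    hence "proj es (ys!j) = ys!j" using assms(2) by (simp add: inspan_def)
    moreover have "mono_ip xs (ys!j # dl j ys) = mono_ip xs ys"
      using j by (intro mono_ip_perm2) (simp add: mset_dl)
    ultimately show "mono_ip xs (proj es (ys!j) # dl j ys) = mono_ip xs ys" by simp
  qed
  also have "\<dots> = of_nat (length ys) * mono_ip xs ys" by simp
  finally show ?thesis .
qed

lemma sl_cong: "(\<And>x. x \<in> set xs \<Longrightarrow> f x = g x) \<Longrightarrow> sum_list (map f xs) = sum_list (map g xs)"
  by (metis map_cong)

lemma num_sv:
  assumes "onl es" "hom n \<psi>" "\<And>w. w \<in> set (vecs \<psi>) \<Longrightarrow> inspan es w"
  shows "(\<Sum>k<length es. sv_ip \<phi> (cre (es!k) (ann (es!k) \<psi>))) = of_nat n * sv_ip \<phi> \<psi>"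
proof -
  have "(\<Sum>k<length es. sv_ip \<phi> (cre (es!k) (ann (es!k) \<psi>))) =
     (\<Sum>(c, xs)\<leftarrow>\<phi>. \<Sum>(d, ys)\<leftarrow>\<psi>. cnj c * d * (\<Sum>k<length es. \<Sum>j<length ys. cinner (es!k) (ys ! j) * mono_ip xs ((es!k) # dl j ys)))"
    unfolding sv_ip_crean2 by (simp add: sl_sum_swap case_prod_unfold sum_distrib_left)
  also have "\<dots> = (\<Sum>(c, xs)\<leftarrow>\<phi>. \<Sum>(d, ys)\<leftarrow>\<psi>. cnj c * d * (of_nat n * mono_ip xs ys))"
  proof -
    have pt: "(\<Sum>k<length es. \<Sum>j<length ys. cinner (es!k) (ys ! j) * mono_ip xs ((es!k) # dl j ys)) =
        of_nat n * mono_ip xs ys" if dy: "(d, ys) \<in> set \<psi>" for d ys xs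
    proof -
      have "length ys = n" using dy assms(2) by (auto simp: hom_def)
      moreover have "inspan es (ys ! j)" if "j < length ys" for j
      proof -
        have "ys ! j \<in> set (vecs \<psi>)" using dy that unfolding vecs_def by force
        thus ?thesis by (rule assms(3))
      qed
      ultimately show ?thesis using num_mono[OF assms(1), of ys xs] by simp
    qed
    show ?thesis
      apply (rule sl_cong)
      apply clarsimp
      apply (rule sl_cong)
      apply clarsimp
      using pt by simp
  qed
  also have "\<dots> = of_nat n * sv_ip \<phi> \<psi>"
    unfolding sv_ip_def by (simp add: case_prod_unfold sum_list_const_mult mult.commute mult.left_commute)
  finally show ?thesis .
qed


lemma hom_ann: "hom (Suc n) \<psi> \<Longrightarrow> hom n (ann v \<psi>)"
  unfolding hom_def ann_def by auto

lemma hom_cre: "hom n \<psi> \<Longrightarrow> hom (Suc n) (cre v \<psi>)"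
  unfolding hom_def cre_def by auto

lemma hom_sc: "hom n \<psi> \<Longrightarrow> hom n (sc t \<psi>)"
  unfolding hom_def sc_def by auto

lemma hom_append: "hom n a \<Longrightarrow> hom n b \<Longrightarrow> hom n (a @ b)"
  unfolding hom_def by auto

lemma sv_ip_hom0:
  assumes "hom 0 \<psi>" and that: "hom 0 \<phi>"
  shows "sv_ip \<psi> \<phi> = cnj (sum_list (map fst \<psi>)) * sum_list (map fst \<phi>)"
proof -
  have "sv_ip \<psi> \<phi> = (\<Sum>(c, xs)\<leftarrow>\<psi>. \<Sum>(d, ys)\<leftarrow>\<phi>. cnj c * d)"
    unfolding sv_ip_def
    apply (rule sl_cong) apply clarsimp apply (rule sl_cong) apply clarsimp
    using assms that unfolding hom_def by fastforce
  also have "\<dots> = cnj (sum_list (map fst \<psi>)) * sum_list (map fst \<phi>)"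
    by (simp add: case_prod_unfold sum_list_const_mult sum_list_mult_const cnj_sl o_def)
  finally show ?thesis .
qed

lemma Re_sl: "Re (sum_list (map f xs)) = sum_list (map (\<lambda>x. Re (f x)) xs)"
  by (induction xs) auto

lemma psd_hom: "hom n \<psi> \<Longrightarrow> 0 \<le> Re (sv_ip \<psi> \<psi>)"
proof (induction n arbitrary: \<psi>)
  case 0
  hence "sv_ip \<psi> \<psi> = cnj (sum_list (map fst \<psi>)) * sum_list (map fst \<psi>)" by (simp add: sv_ip_hom0)
  thus ?case by simp
next
  case (Suc n)
  obtain es where es: "onl es" "\<forall>w\<in>set (vecs \<psi>). inspan es w"
    using gs[of "[]" "vecs \<psi>"] by (auto simp: onl_def)
  have "of_nat (Suc n) * sv_ip \<psi> \<psi> = (\<Sum>k<length es. sv_ip \<psi> (cre (es!k) (ann (es!k) \<psi>)))"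
    using num_sv[OF es(1) Suc.prems, of \<psi>] es(2) by simp
  also have "\<dots> = (\<Sum>k<length es. sv_ip (ann (es!k) \<psi>) (ann (es!k) \<psi>))"
    by (simp add: sv_ip_ann_cre)
  finally have eq: "of_nat (Suc n) * sv_ip \<psi> \<psi> = (\<Sum>k<length es. sv_ip (ann (es!k) \<psi>) (ann (es!k) \<psi>))" .
  have "0 \<le> Re (\<Sum>k<length es. sv_ip (ann (es!k) \<psi>) (ann (es!k) \<psi>))"
    unfolding Re_sum by (intro sum_nonneg Suc.IH hom_ann Suc.prems)
  hence "0 \<le> real (Suc n) * Re (sv_ip \<psi> \<psi>)" unfolding eq[symmetric] by simp
  thus ?case by (simp add: zero_le_mult_iff)
qed


lemma dl_Cons0[simp]: "dl 0 (v # ys) = ys" by (simp add: dl_def)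
lemma dl_Cons_Suc[simp]: "dl (Suc j) (v # ys) = v # dl j ys" by (simp add: dl_def)

lemma sv_ip_ann_cre_expand:
  "sv_ip \<phi> (ann v (cre v \<psi>)) = cinner v v * sv_ip \<phi> \<psi> + sv_ip \<phi> (cre v (ann v \<psi>))"
proof -
  have "sv_ip \<phi> (ann v (cre v \<psi>)) = (\<Sum>(c, xs)\<leftarrow>\<phi>. \<Sum>(d, ys)\<leftarrow>\<psi>.
       cnj c * d * (cinner v v * mono_ip xs ys) + cnj c * d * (\<Sum>j<length ys. cinner v (ys ! j) * mono_ip xs (v # dl j ys)))"
    unfolding sv_ip_ann2 cre_def
    by (simp add: o_def case_prod_unfold sum.lessThan_Suc_shift distrib_left del: sum.lessThan_Suc)
  also have "\<dots> = (\<Sum>(c, xs)\<leftarrow>\<phi>. cinner v v * (\<Sum>(d, ys)\<leftarrow>\<psi>. cnj c * d * mono_ip xs ys)) + sv_ip \<phi> (cre v (ann v \<psi>))"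
    unfolding sv_ip_crean2
    by (simp add: case_prod_unfold sum_list_addf sum_list_const_mult[symmetric] algebra_simps)
  also have "\<dots> = cinner v v * sv_ip \<phi> \<psi> + sv_ip \<phi> (cre v (ann v \<psi>))"
    unfolding sv_ip_def by (simp add: sum_list_const_mult case_prod_unfold)
  finally show ?thesis .
qed

lemma ccr:
  "sv_ip (cre v \<psi>) (cre v \<psi>) = sv_ip (ann v \<psi>) (ann v \<psi>) + cinner v v * sv_ip \<psi> \<psi>"
proof -
  have "sv_ip (cre v \<psi>) (cre v \<psi>) = sv_ip \<psi> (ann v (cre v \<psi>))" by (rule sv_ip_cre_ann)
  also have "\<dots> = cinner v v * sv_ip \<psi> \<psi> + sv_ip \<psi> (cre v (ann v \<psi>))" by (rule sv_ip_ann_cre_expand)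
  also have "sv_ip \<psi> (cre v (ann v \<psi>)) = sv_ip (ann v \<psi>) (ann v \<psi>)" by (simp add: sv_ip_ann_cre)
  finally show ?thesis by simp
qed

lemma ann_scale: "ann (t *\<^sub>C e) \<psi> = sc (cnj t) (ann e \<psi>)"
  unfolding ann_def sc_def
  by (simp add: map_concat o_def case_prod_unfold cinner_scaleC_left mult.commute mult.left_commute)

lemma ann_zero_ip: "sv_ip \<phi> (ann 0 \<psi>) = 0"
  unfolding sv_ip_ann2 by (simp add: case_prod_unfold)

lemma ann_hom0: "hom 0 \<psi> \<Longrightarrow> ann v \<psi> = []"
  unfolding hom_def ann_def by auto

lemma ann_bound:
  assumes "hom n \<psi>"
  shows "Re (sv_ip (ann v \<psi>) (ann v \<psi>)) \<le> real n * (cnorm v)^2 * Re (sv_ip \<psi> \<psi>)"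
proof (cases "v = 0 \<or> n = 0")
  case True
  have "0 \<le> Re (sv_ip \<psi> \<psi>)" by (rule psd_hom[OF assms])
  moreover have "sv_ip (ann v \<psi>) (ann v \<psi>) = 0"
  proof (cases "v = 0")
    case True thus ?thesis using ann_zero_ip by simp
  next
    case False
    hence "n = 0" using \<open>v = 0 \<or> n = 0\<close> by simp
    thus ?thesis using ann_hom0[of \<psi> v] assms by simp
  qed
  ultimately show ?thesis by simp
next
  case False
  then obtain m where n: "n = Suc m" and v0: "v \<noteq> 0" by (cases n) auto
  define nv where "nv = cnorm v"
  have nv0: "nv > 0" using v0 cnorm_ge0[of v] cnorm_eq_0[of v] by (simp add: nv_def)
  define e where "e = complex_of_real (1 / nv) *\<^sub>C v"
  have ve: "v = complex_of_real nv *\<^sub>C e" using nv0 by (simp add: e_def scaleC_scaleC scaleC_one)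
  have ee: "cinner e e = 1"
  proof -
    have vv: "cinner v v = complex_of_real (nv^2)" by (simp add: nv_def cinner_self_eq)
    show ?thesis using nv0 by (simp add: e_def cinner_scaleC_left cinner_scaleC_right vv power2_eq_square)
  qed
  have on0: "onl [e]" using ee by (simp add: onl_def)
  obtain r where r: "onl ([e] @ r)" "\<forall>w\<in>set (vecs \<psi>). inspan ([e] @ r) w"
    using gs[OF on0, of "vecs \<psi>"] by blast
  define es where "es = e # r"
  have es: "onl es" "\<And>w. w \<in> set (vecs \<psi>) \<Longrightarrow> inspan es w" using r by (auto simp: es_def)
  have eqn: "of_nat n * sv_ip \<psi> \<psi> = (\<Sum>k<length es. sv_ip (ann (es!k) \<psi>) (ann (es!k) \<psi>))"
    using num_sv[OF es(1) assms es(2), of \<psi>] by (simp add: sv_ip_ann_cre)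
  have "real n * Re (sv_ip \<psi> \<psi>) = (\<Sum>k<length es. Re (sv_ip (ann (es!k) \<psi>) (ann (es!k) \<psi>)))"
  proof -
    from arg_cong[OF eqn, of Re] show ?thesis by (simp add: Re_sum)
  qed
  also have "\<dots> \<ge> (\<Sum>k\<in>{0}. Re (sv_ip (ann (es!k) \<psi>) (ann (es!k) \<psi>)))"
  proof (rule sum_mono2)
    show "0 \<le> Re (sv_ip (ann (es!k) \<psi>) (ann (es!k) \<psi>))" for k
      using psd_hom[OF hom_ann[OF assms[unfolded n]]] .
  qed (auto simp: es_def)
  finally have A: "Re (sv_ip (ann e \<psi>) (ann e \<psi>)) \<le> real n * Re (sv_ip \<psi> \<psi>)" by (simp add: es_def)
  have "sv_ip (ann v \<psi>) (ann v \<psi>) = complex_of_real (nv^2) * sv_ip (ann e \<psi>) (ann e \<psi>)"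
    unfolding ve ann_scale by (simp add: sv_ip_sc1 sv_ip_sc2 power2_eq_square)
  hence "Re (sv_ip (ann v \<psi>) (ann v \<psi>)) = nv^2 * Re (sv_ip (ann e \<psi>) (ann e \<psi>))" by simp
  also have "\<dots> \<le> nv^2 * (real n * Re (sv_ip \<psi> \<psi>))" using A by (simp add: mult_left_mono)
  finally show ?thesis by (simp add: nv_def mult.commute mult.left_commute)
qed

lemma cre_bound:
  assumes "hom n \<psi>"
  shows "Re (sv_ip (cre v \<psi>) (cre v \<psi>)) \<le> real (Suc n) * (cnorm v)^2 * Re (sv_ip \<psi> \<psi>)"
proof -
  have "Re (sv_ip (cre v \<psi>) (cre v \<psi>)) = Re (sv_ip (ann v \<psi>) (ann v \<psi>)) + (cnorm v)^2 * Re (sv_ip \<psi> \<psi>)"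
    unfolding ccr by (simp add: cinner_self_eq)
  also have "\<dots> \<le> real n * (cnorm v)^2 * Re (sv_ip \<psi> \<psi>) + (cnorm v)^2 * Re (sv_ip \<psi> \<psi>)"
    using ann_bound[OF assms, of v] by simp
  finally show ?thesis by (simp add: algebra_simps)
qed


definition dg :: "nat \<Rightarrow> 'v sv \<Rightarrow> 'v sv" where
  "dg n \<psi> = filter (\<lambda>(c, xs). length xs = n) \<psi>"

definition bnd :: "'v sv \<Rightarrow> nat" where
  "bnd \<psi> = sum_list (map (\<lambda>(c, xs). Suc (length xs)) \<psi>)"

lemma bnd_gt: "(c, xs) \<in> set \<psi> \<Longrightarrow> length xs < bnd \<psi>"
  unfolding bnd_def
proof (induction \<psi>)
  case (Cons a \<psi>) thus ?case by (cases a) auto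
qed simp

lemma sl_part:
  fixes g :: "'a \<Rightarrow> nat"
  assumes "\<forall>x\<in>set xs. g x < N"
  shows "sum_list (map f xs) = (\<Sum>n<N. sum_list (map f (filter (\<lambda>x. g x = n) xs)))"
  using assms
proof (induction xs)
  case Nil thus ?case by simp
next
  case (Cons x xs)
  have "(\<Sum>n<N. sum_list (map f (filter (\<lambda>y. g y = n) (x # xs)))) =
        (\<Sum>n<N. (if g x = n then f x else 0) + sum_list (map f (filter (\<lambda>y. g y = n) xs)))"
    by (intro sum.cong) auto
  also have "\<dots> = f x + (\<Sum>n<N. sum_list (map f (filter (\<lambda>y. g y = n) xs)))"
  proof -
    have gx: "g x < N" using Cons.prems by simp
    have "(\<Sum>n<N. if g x = n then f x else 0) = f x" using gx by simp
    thus ?thesis by (simp add: sum.distrib)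
  qed
  finally show ?case using Cons by simp
qed

lemma hom_dg: "hom n (dg n \<psi>)" unfolding hom_def dg_def by auto

lemma sv_ip_dg_right: "sv_ip (dg n \<phi>) \<psi> = sv_ip (dg n \<phi>) (dg n \<psi>)"
  unfolding sv_ip_def dg_def
  by (rule sl_cong, clarsimp, rule sum_list_map_filter[symmetric]) (auto simp: mono_ip_len)

lemma sl_part_len:
  assumes "\<forall>(c, xs)\<in>set \<phi>. length xs < N"
  shows "sum_list (map f \<phi>) = (\<Sum>n<N. sum_list (map f (filter (\<lambda>(c, xs). length xs = n) \<phi>)))"
proof -
  have h: "\<forall>x\<in>set \<phi>. length (snd x) < N" using assms by auto
  have e: "(\<lambda>(c, xs). length xs = n) = (\<lambda>x. length (snd x) = n)" for n :: nat by auto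
  show ?thesis unfolding e by (rule sl_part[OF h])
qed

lemma sv_ip_split:
  assumes "\<forall>(c, xs)\<in>set \<phi>. length xs < N"
  shows "sv_ip \<phi> \<psi> = (\<Sum>n<N. sv_ip (dg n \<phi>) (dg n \<psi>))"
proof -
  have "sv_ip \<phi> \<psi> = (\<Sum>n<N. sv_ip (dg n \<phi>) \<psi>)"
    unfolding sv_ip_def dg_def by (rule sl_part_len[OF assms])
  also have "\<dots> = (\<Sum>n<N. sv_ip (dg n \<phi>) (dg n \<psi>))"
    by (rule sum.cong[OF refl], rule sv_ip_dg_right)
  finally show ?thesis .
qed

lemma sv_eval_split:
  assumes "\<forall>(c, xs)\<in>set \<psi>. length xs < N"
  shows "sv_eval F \<psi> = (\<Sum>n<N. sv_eval F (dg n \<psi>))"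
  unfolding sv_eval_def dg_def by (rule sl_part_len[OF assms])

lemma bnd_all: "\<forall>(c, xs)\<in>set \<psi>. length xs < bnd \<psi>"
  using bnd_gt by auto

lemma sv_psd: "0 \<le> Re (sv_ip \<psi> \<psi>)"
proof -
  have "sv_ip \<psi> \<psi> = (\<Sum>n<bnd \<psi>. sv_ip (dg n \<psi>) (dg n \<psi>))" by (rule sv_ip_split[OF bnd_all])
  hence "Re (sv_ip \<psi> \<psi>) = (\<Sum>n<bnd \<psi>. Re (sv_ip (dg n \<psi>) (dg n \<psi>)))" by (simp add: Re_sum)
  moreover have "0 \<le> (\<Sum>n<bnd \<psi>. Re (sv_ip (dg n \<psi>) (dg n \<psi>)))" by (intro sum_nonneg psd_hom[OF hom_dg])
  ultimately show ?thesis by simp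
qed

lemma sv_ip_self_real: "sv_ip \<psi> \<psi> = complex_of_real (Re (sv_ip \<psi> \<psi>))"
proof -
  have "Im (sv_ip \<psi> \<psi>) = 0" using sv_ip_cnj[of \<psi> \<psi>] by (metis cnj.sel(2) neg_equal_zero)
  thus ?thesis by (simp add: complex_eq_iff)
qed

lemma sv_norm_sq: "(sv_norm \<psi>)^2 = Re (sv_ip \<psi> \<psi>)"
  using sv_psd[of \<psi>] by (simp add: sv_norm_def real_sqrt_pow2)

lemma sv_norm_ge0: "sv_norm \<psi> \<ge> 0" using sv_psd[of \<psi>] by (simp add: sv_norm_def)

lemma sv_norm_sq_split: "(sv_norm \<psi>)^2 = (\<Sum>n<N. (sv_norm (dg n \<psi>))^2)"
  if "\<forall>(c, xs)\<in>set \<psi>. length xs < N"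
  using sv_ip_split[OF that, of \<psi>] by (simp add: sv_norm_sq Re_sum)

lemma sv_norm_sc: "sv_norm (sc t \<psi>) = cmod t * sv_norm \<psi>"
proof -
  have "Re (sv_ip (sc t \<psi>) (sc t \<psi>)) = (cmod t)^2 * Re (sv_ip \<psi> \<psi>)"
  proof -
    have "sv_ip (sc t \<psi>) (sc t \<psi>) = (cnj t * t) * sv_ip \<psi> \<psi>" by (simp add: sv_ip_sc1 sv_ip_sc2)
    also have "cnj t * t = complex_of_real ((cmod t)^2)" using complex_norm_square[of t] by (simp add: mult.commute)
    finally show ?thesis by simp
  qed
  hence "sv_norm (sc t \<psi>) = sqrt ((cmod t)^2) * sqrt (Re (sv_ip \<psi> \<psi>))"
    unfolding sv_norm_def by (simp only: real_sqrt_mult)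
  thus ?thesis by (simp add: sv_norm_def)
qed


lemma sv_ip_expand:
  "sv_ip (\<psi> @ sc u \<phi>) (\<psi> @ sc u \<phi>) =
     sv_ip \<psi> \<psi> + u * sv_ip \<psi> \<phi> + cnj u * sv_ip \<phi> \<psi> + cnj u * u * sv_ip \<phi> \<phi>"
  by (simp add: sv_ip_append1 sv_ip_append2 sv_ip_sc1 sv_ip_sc2 algebra_simps)

lemma real_quad:
  fixes A B C :: real
  assumes "B \<ge> 0" "C \<ge> 0" "\<And>r. 0 \<le> A - 2 * r * B + r^2 * B * C"
  shows "B \<le> A * C"
proof (cases "C = 0")
  case True
  show ?thesis
  proof (rule ccontr)
    assume "\<not> B \<le> A * C"
    hence B: "B > 0" using True by simp
    have "0 \<le> A - 2 * ((\<bar>A\<bar> + 1) / B) * B" using assms(3)[of "(\<bar>A\<bar> + 1) / B"] True by simp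
    also have "\<dots> = A - 2 * (\<bar>A\<bar> + 1)" using B by simp
    finally have "0 \<le> A - 2 * (\<bar>A\<bar> + 1)" .
    thus False by (cases "A \<ge> 0") auto
  qed
next
  case False
  hence C: "C > 0" using assms(2) by simp
  have "0 \<le> A - 2 * (1/C) * B + (1/C)^2 * B * C" by (rule assms(3))
  also have "\<dots> = A - B / C" using C by (simp add: power2_eq_square field_simps)
  finally show ?thesis using C by (simp add: field_simps)
qed

lemma sv_cs: "cmod (sv_ip \<phi> \<psi>) \<le> sv_norm \<phi> * sv_norm \<psi>"
proof -
  define b where "b = sv_ip \<phi> \<psi>"
  define A where "A = Re (sv_ip \<psi> \<psi>)"
  define C where "C = Re (sv_ip \<phi> \<phi>)"
  have pp: "sv_ip \<phi> \<phi> = complex_of_real C" unfolding C_def by (rule sv_ip_self_real)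
  have qq: "sv_ip \<psi> \<psi> = complex_of_real A" unfolding A_def by (rule sv_ip_self_real)
  have qp: "sv_ip \<psi> \<phi> = cnj b" unfolding b_def by (rule sv_ip_cnj)
  have bb: "cnj b * b = complex_of_real ((cmod b)^2)" using complex_norm_square[of b] by (simp add: mult.commute)
  have "0 \<le> A - 2 * r * (cmod b)^2 + r^2 * (cmod b)^2 * C" for r
  proof -
    define u where "u = - complex_of_real r * b"
    have "sv_ip (\<psi> @ sc u \<phi>) (\<psi> @ sc u \<phi>) = complex_of_real (A - 2 * r * (cmod b)^2 + r^2 * (cmod b)^2 * C)"
    proof -
      have "sv_ip (\<psi> @ sc u \<phi>) (\<psi> @ sc u \<phi>) = complex_of_real A - 2 * complex_of_real r * (cnj b * b)
           + complex_of_real r ^ 2 * (cnj b * b) * complex_of_real C"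
        unfolding sv_ip_expand pp qq qp b_def[symmetric] u_def by (simp add: algebra_simps power2_eq_square)
      thus ?thesis unfolding bb by simp
    qed
    thus ?thesis using sv_psd[of "\<psi> @ sc u \<phi>"] by simp
  qed
  hence "(cmod b)^2 \<le> A * C" by (intro real_quad) (auto simp: C_def sv_psd)
  hence "sqrt ((cmod b)^2) \<le> sqrt (A * C)" by (rule real_sqrt_le_mono)
  hence "sqrt ((cmod b)^2) \<le> sqrt A * sqrt C" by (simp add: real_sqrt_mult)
  thus ?thesis by (simp add: b_def A_def C_def sv_norm_def mult.commute)
qed

lemma fin_cs:
  fixes x y :: "nat \<Rightarrow> real"
  shows "(\<Sum>n\<in>I. x n * y n) \<le> sqrt (\<Sum>n\<in>I. (x n)^2) * sqrt (\<Sum>n\<in>I. (y n)^2)"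
proof -
  have "(\<Sum>n\<in>I. x n * y n)^2 \<le> (\<Sum>n\<in>I. (x n)^2) * (\<Sum>n\<in>I. (y n)^2)" by (rule Cauchy_Schwarz_ineq_sum)
  hence "sqrt ((\<Sum>n\<in>I. x n * y n)^2) \<le> sqrt ((\<Sum>n\<in>I. (x n)^2) * (\<Sum>n\<in>I. (y n)^2))"
    by (rule real_sqrt_le_mono)
  hence "\<bar>\<Sum>n\<in>I. x n * y n\<bar> \<le> sqrt (\<Sum>n\<in>I. (x n)^2) * sqrt (\<Sum>n\<in>I. (y n)^2)"
    by (simp add: real_sqrt_mult)
  thus ?thesis by linarith
qed

lemma gen_bound:
  assumes hb: "\<And>n \<psi>. hom n \<psi> \<Longrightarrow> cmod (sv_eval H \<psi>) \<le> b n * sv_norm \<psi>"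
    and b0: "\<And>n. b n \<ge> 0" and sb: "summable (\<lambda>n. (b n)^2)"
  shows "\<exists>C. \<forall>\<psi>. cmod (sv_eval H \<psi>) \<le> C * sv_norm \<psi>"
proof (intro exI allI)
  fix \<psi> :: "'a sv"
  define N where "N = bnd \<psi>"
  have "cmod (sv_eval H \<psi>) = cmod (\<Sum>n<N. sv_eval H (dg n \<psi>))"
    unfolding N_def using sv_eval_split[OF bnd_all, of H \<psi>] by simp
  also have "\<dots> \<le> (\<Sum>n<N. cmod (sv_eval H (dg n \<psi>)))" by (rule norm_sum)
  also have "\<dots> \<le> (\<Sum>n<N. b n * sv_norm (dg n \<psi>))" by (intro sum_mono hb hom_dg)
  also have "\<dots> \<le> sqrt (\<Sum>n<N. (b n)^2) * sqrt (\<Sum>n<N. (sv_norm (dg n \<psi>))^2)" by (rule fin_cs)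
  also have "sqrt (\<Sum>n<N. (sv_norm (dg n \<psi>))^2) = sv_norm \<psi>"
    using sv_norm_sq_split[OF bnd_all, of \<psi>] sv_norm_ge0[of \<psi>] unfolding N_def
    by (metis real_sqrt_abs abs_of_nonneg)
  also have "sqrt (\<Sum>n<N. (b n)^2) \<le> sqrt (suminf (\<lambda>n. (b n)^2))"
    by (intro real_sqrt_le_mono sum_le_suminf[OF sb]) auto
  finally show "cmod (sv_eval H \<psi>) \<le> sqrt (suminf (\<lambda>n. (b n)^2)) * sv_norm \<psi>"
    using sv_norm_ge0[of \<psi>] by (simp add: mult_right_mono)
qed


lemma fock_bound: "F \<in> fock \<Longrightarrow> \<exists>C. \<forall>\<psi>. cmod (sv_eval F \<psi>) \<le> C * sv_norm \<psi>"
  unfolding fock_def by auto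

lemma fock_ad: "F \<in> fock \<Longrightarrow> sv_antidual F"
  unfolding fock_def by auto

lemma hom_eq: "(\<forall>(c, xs)\<in>set \<psi>. length xs = n) = hom n \<psi>"
  by (simp add: hom_def)

lemma sv_eval_Nil[simp]: "sv_eval F [] = 0" by (simp add: sv_eval_def)
lemma sv_norm_Nil[simp]: "sv_norm [] = 0" by (simp add: sv_norm_def)

lemma comp_bdd:
  assumes "F \<in> fock"
  shows "bdd_above {cmod (sv_eval F \<psi>) | \<psi>. (\<forall>(c, xs)\<in>set \<psi>. length xs = n) \<and> sv_norm \<psi> \<le> 1}"
proof -
  obtain C where C: "\<And>\<psi>. cmod (sv_eval F \<psi>) \<le> C * sv_norm \<psi>" using fock_bound[OF assms] by blast
  have "cmod (sv_eval F \<psi>) \<le> max C 0" if "sv_norm \<psi> \<le> 1" for \<psi>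
  proof -
    have "C * sv_norm \<psi> \<le> max C 0" using that sv_norm_ge0[of \<psi>]
      by (cases "C \<ge> 0") (auto intro: mult_left_le order_trans[OF mult_nonpos_nonneg])
    thus ?thesis using C[of \<psi>] by linarith
  qed
  thus ?thesis unfolding bdd_above_def by blast
qed

lemma comp_norm_lower:
  assumes "F \<in> fock" "hom n \<psi>" "sv_norm \<psi> \<le> 1"
  shows "cmod (sv_eval F \<psi>) \<le> comp_norm F n"
  unfolding comp_norm_def
  by (rule cSup_upper[OF _ comp_bdd[OF assms(1)]]) (use assms in \<open>auto simp: hom_def\<close>)

lemma comp_norm_ge0: "F \<in> fock \<Longrightarrow> 0 \<le> comp_norm F n"
  using comp_norm_lower[of F n "[]"] by (simp add: hom_def)

lemma comp_norm_bound:
  assumes F: "F \<in> fock" and h: "hom n \<psi>"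
  shows "cmod (sv_eval F \<psi>) \<le> comp_norm F n * sv_norm \<psi>"
proof (cases "sv_norm \<psi> = 0")
  case True
  obtain C where C: "\<And>\<psi>. cmod (sv_eval F \<psi>) \<le> C * sv_norm \<psi>" using fock_bound[OF F] by blast
  show ?thesis using C[of \<psi>] True by simp
next
  case False
  define s where "s = sv_norm \<psi>"
  have s0: "s > 0" using False sv_norm_ge0[of \<psi>] by (simp add: s_def)
  define \<phi> where "\<phi> = sc (complex_of_real (1 / s)) \<psi>"
  have "sv_norm \<phi> = 1" using s0 by (simp add: \<phi>_def sv_norm_sc s_def norm_divide)
  hence "cmod (sv_eval F \<phi>) \<le> comp_norm F n"
    using comp_norm_lower[OF F hom_sc[OF h]] by (simp add: \<phi>_def)
  moreover have "cmod (sv_eval F \<phi>) = cmod (sv_eval F \<psi>) / s"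
    using s0 by (simp add: \<phi>_def sv_eval_sc norm_mult norm_divide)
  ultimately have "cmod (sv_eval F \<psi>) / s \<le> comp_norm F n" by simp
  thus ?thesis using s0 by (simp add: s_def field_simps)
qed


lemma ad_ann: "sv_antidual F \<Longrightarrow> sv_antidual (annihilator v F)"
  unfolding sv_antidual_def annihilator_def
proof (intro conjI allI impI)
  fix xs ys :: "'a list"
  assume "(\<forall>xs ys. mset xs = mset ys \<longrightarrow> F xs = F ys) \<and> (\<forall>xs ys a b x y. F (xs @ (a *\<^sub>C x + b *\<^sub>C y) # ys) = cnj a * F (xs @ x # ys) + cnj b * F (xs @ y # ys))"
    and "mset xs = mset ys"
  thus "F (v # xs) = F (v # ys)" by simp
next
  fix xs ys :: "'a list" and a b x y
  assume h: "(\<forall>xs ys. mset xs = mset ys \<longrightarrow> F xs = F ys) \<and> (\<forall>xs ys a b x y. F (xs @ (a *\<^sub>C x + b *\<^sub>C y) # ys) = cnj a * F (xs @ x # ys) + cnj b * F (xs @ y # ys))"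
  show "F (v # xs @ (a *\<^sub>C x + b *\<^sub>C y) # ys) = cnj a * F (v # xs @ x # ys) + cnj b * F (v # xs @ y # ys)"
    using h[THEN conjunct2, rule_format, of "v # xs"] by simp
qed

lemma ad_sym: "sv_antidual F \<Longrightarrow> mset xs = mset ys \<Longrightarrow> F xs = F ys"
  unfolding sv_antidual_def by blast

lemma ad_lin: "sv_antidual F \<Longrightarrow> F (xs @ (a *\<^sub>C x + b *\<^sub>C y) # ys) = cnj a * F (xs @ x # ys) + cnj b * F (xs @ y # ys)"
  unfolding sv_antidual_def by blast

lemma ad_intro:
  assumes "\<And>xs ys. mset xs = mset ys \<Longrightarrow> F xs = F ys"
    and "\<And>ws a b x y. F ((a *\<^sub>C x + b *\<^sub>C y) # ws) = cnj a * F (x # ws) + cnj b * F (y # ws)"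
  shows "sv_antidual F"
  unfolding sv_antidual_def
proof (intro conjI allI impI)
  fix xs ys :: "'a list" assume "mset xs = mset ys" thus "F xs = F ys" by (rule assms(1))
next
  fix xs ys :: "'a list" and a b x y
  have e: "F (xs @ z # ys) = F (z # xs @ ys)" for z by (rule assms(1)) simp
  show "F (xs @ (a *\<^sub>C x + b *\<^sub>C y) # ys) = cnj a * F (xs @ x # ys) + cnj b * F (xs @ y # ys)"
    unfolding e by (rule assms(2))
qed

lemma creator_dl: "creator v F xs = (\<Sum>j<length xs. cinner (xs ! j) v * F (dl j xs))"
  by (simp add: creator_def dl_def)

lemma cre_sym:
  assumes F: "sv_antidual F" and m: "mset xs = mset ys"
  shows "creator v F xs = creator v F ys"
proof -
  obtain s where s: "s permutes {..<length xs}" "permute_list s xs = ys"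
    using mset_eq_permutation[of ys xs] m by metis
  have ly: "length ys = length xs" using s(2) by auto
  have ys: "ys ! j = xs ! s j" if "j < length xs" for j
    using s that by (auto simp: permute_list_nth)
  have sj: "s j < length xs" if "j < length xs" for j using permutes_in_image[OF s(1)] that by simp
  define g where "g k = cinner (xs ! k) v * F (dl k xs)" for k
  have "creator v F ys = (\<Sum>j<length xs. g (s j))"
    unfolding creator_dl ly
  proof (rule sum.cong[OF refl])
    fix j assume j: "j \<in> {..<length xs}"
    have "mset (dl j ys) = mset (dl (s j) xs)"
      using j sj[of j] ys[of j] ly m by (simp add: mset_dl)
    hence "F (dl j ys) = F (dl (s j) xs)" by (rule ad_sym[OF F])
    thus "cinner (ys ! j) v * F (dl j ys) = g (s j)" using j ys[of j] by (simp add: g_def)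
  qed
  also have "\<dots> = (\<Sum>j<length xs. g j)"
    by (rule sum.reindex_bij_betw[OF permutes_imp_bij[OF s(1)]])
  finally show ?thesis by (simp add: creator_dl g_def)
qed

lemma cre_Cons: "creator v F (z # ws) = cinner z v * F ws + (\<Sum>j<length ws. cinner (ws!j) v * F (z # dl j ws))"
  unfolding creator_dl by (simp add: sum.lessThan_Suc_shift del: sum.lessThan_Suc)

lemma ad_cre: "sv_antidual F \<Longrightarrow> sv_antidual (creator v F)"
proof (rule ad_intro)
  assume F: "sv_antidual F"
  show "mset xs = mset ys \<Longrightarrow> creator v F xs = creator v F ys" for xs ys by (rule cre_sym[OF F])
  show "creator v F ((a *\<^sub>C x + b *\<^sub>C y) # ws) = cnj a * creator v F (x # ws) + cnj b * creator v F (y # ws)"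
    for ws a b x y
  proof -
    have l: "F ((a *\<^sub>C x + b *\<^sub>C y) # zs) = cnj a * F (x # zs) + cnj b * F (y # zs)" for zs
      using ad_lin[OF F, of "[]"] by simp
    show ?thesis unfolding cre_Cons l
      by (simp add: cinner_add_left cinner_scaleC_left algebra_simps sum.distrib sum_distrib_left)
  qed
qed


lemma norm_from_sq:
  assumes "(sv_norm \<phi>)^2 \<le> k * (cnorm v)^2 * (sv_norm \<psi>)^2" "k \<ge> 0"
  shows "sv_norm \<phi> \<le> sqrt k * cnorm v * sv_norm \<psi>"
proof (rule power2_le_imp_le)
  show "(sv_norm \<phi>)^2 \<le> (sqrt k * cnorm v * sv_norm \<psi>)^2"
    using assms by (simp add: power_mult_distrib real_sqrt_pow2)
  show "0 \<le> sqrt k * cnorm v * sv_norm \<psi>" using assms(2) cnorm_ge0[of v] sv_norm_ge0[of \<psi>] by simp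
qed

lemma dir1:
  assumes "F \<in> dom_N_half"
  shows "F \<in> dom_creator v \<inter> dom_annihilator v"
proof -
  have F: "F \<in> fock" and sm: "summable (\<lambda>n. real n * (comp_norm F n)^2)"
    using assms by (auto simp: dom_N_half_def)
  define a where "a n = comp_norm F n" for n
  have a0: "a n \<ge> 0" for n using comp_norm_ge0[OF F] by (simp add: a_def)
  have smS: "summable (\<lambda>n. real (Suc n) * (a (Suc n))^2)"
    using sm summable_Suc_iff[of "\<lambda>n. real n * (a n)^2"] by (simp add: a_def)
  have sa: "summable (\<lambda>n. (a n)^2)"
  proof -
    have "summable (\<lambda>n. (a (Suc n))^2)"
      by (rule summable_comparison_test'[OF smS, of 0]) (auto simp: mult_le_cancel_right1)
    thus ?thesis using summable_Suc_iff[of "\<lambda>n. (a n)^2"] by simp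
  qed
  have "annihilator v F \<in> fock"
  proof -
    define b where "b n = a (Suc n) * (sqrt (real (Suc n)) * cnorm v)" for n
    have hb: "cmod (sv_eval (annihilator v F) \<psi>) \<le> b n * sv_norm \<psi>" if h: "hom n \<psi>" for n \<psi>
    proof -
      have "cmod (sv_eval (annihilator v F) \<psi>) = cmod (sv_eval F (cre v \<psi>))" by (simp add: sv_eval_cre)
      also have "\<dots> \<le> a (Suc n) * sv_norm (cre v \<psi>)"
        unfolding a_def by (rule comp_norm_bound[OF F hom_cre[OF h]])
      also have "sv_norm (cre v \<psi>) \<le> sqrt (real (Suc n)) * cnorm v * sv_norm \<psi>"
        by (rule norm_from_sq) (use cre_bound[OF h, of v] in \<open>simp_all add: sv_norm_sq\<close>)
      finally show ?thesis using a0[of "Suc n"] by (simp add: b_def mult_left_mono mult.assoc)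
    qed
    have b0: "b n \<ge> 0" for n using a0 cnorm_ge0[of v] by (simp add: b_def)
    have sb: "summable (\<lambda>n. (b n)^2)"
    proof -
      have "(b n)^2 = (cnorm v)^2 * (real (Suc n) * (a (Suc n))^2)" for n
        by (simp add: b_def power_mult_distrib real_sqrt_pow2 del: of_nat_Suc)
      thus ?thesis using summable_mult[OF smS, of "(cnorm v)^2"] by simp
    qed
    obtain C where "\<forall>\<psi>. cmod (sv_eval (annihilator v F) \<psi>) \<le> C * sv_norm \<psi>"
      using gen_bound[OF hb b0 sb] by blast
    thus ?thesis unfolding fock_def using ad_ann[OF fock_ad[OF F]] by blast
  qed
  moreover have "creator v F \<in> fock"
  proof -
    define b where "b n = a (n - 1) * (sqrt (real n) * cnorm v)" for n
    have hb: "cmod (sv_eval (creator v F) \<psi>) \<le> b n * sv_norm \<psi>" if h: "hom n \<psi>" for n \<psi>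
    proof (cases n)
      case 0
      hence "ann v \<psi> = []" using ann_hom0 h by simp
      hence "sv_eval (creator v F) \<psi> = 0" by (metis sv_eval_ann sv_eval_Nil)
      thus ?thesis using 0 by (simp add: b_def)
    next
      case (Suc m)
      have hm: "hom m (ann v \<psi>)" using h Suc by (simp add: hom_ann)
      have "cmod (sv_eval (creator v F) \<psi>) = cmod (sv_eval F (ann v \<psi>))" by (simp add: sv_eval_ann)
      also have "\<dots> \<le> a m * sv_norm (ann v \<psi>)"
        unfolding a_def by (rule comp_norm_bound[OF F hm])
      also have "sv_norm (ann v \<psi>) \<le> sqrt (real n) * cnorm v * sv_norm \<psi>"
        by (rule norm_from_sq) (use ann_bound[OF h, of v] in \<open>simp_all add: sv_norm_sq\<close>)
      finally show ?thesis using a0[of m] Suc by (simp add: b_def mult_left_mono mult.assoc)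
    qed
    have b0: "b n \<ge> 0" for n using a0 cnorm_ge0[of v] by (simp add: b_def)
    have sb: "summable (\<lambda>n. (b n)^2)"
    proof -
      have "(b (Suc n))^2 = (cnorm v)^2 * (real n * (a n)^2 + (a n)^2)" for n
        by (simp add: b_def power_mult_distrib real_sqrt_pow2 algebra_simps)
      moreover have "summable (\<lambda>n. (cnorm v)^2 * (real n * (a n)^2 + (a n)^2))"
        by (intro summable_mult summable_add) (use sm sa in \<open>simp_all add: a_def\<close>)
      ultimately have "summable (\<lambda>n. (b (Suc n))^2)" by simp
      thus ?thesis using summable_Suc_iff[of "\<lambda>n. (b n)^2"] by simp
    qed
    obtain C where "\<forall>\<psi>. cmod (sv_eval (creator v F) \<psi>) \<le> C * sv_norm \<psi>"
      using gen_bound[OF hb b0 sb] by blast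
    thus ?thesis unfolding fock_def using ad_cre[OF fock_ad[OF F]] by blast
  qed
  ultimately show ?thesis using F by (simp add: dom_creator_def dom_annihilator_def)
qed


lemma onl_distinct: "onl es \<Longrightarrow> distinct es"
  unfolding distinct_conv_nth
proof (intro allI impI)
  fix i j assume o: "onl es" and i: "i < length es" and j: "j < length es" and ij: "i \<noteq> j"
  show "es ! i \<noteq> es ! j"
  proof
    assume eq: "es ! i = es ! j"
    have "cinner (es!i) (es!j) = 0" using o i j ij unfolding onl_def by auto
    moreover have "cinner (es!i) (es!i) = 1" using o i unfolding onl_def by auto
    ultimately show False using eq by simp
  qed
qed

lemma inspan_cspan:
  assumes "onl es" "inspan es w"
  shows "w \<in> cspan (set es)"
proof -
  have "w = (\<Sum>k<length es. cinner (es!k) w *\<^sub>C es!k)" using assms(2) by (simp add: inspan_def proj_def)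
  also have "\<dots> = (\<Sum>s\<in>set es. cinner s w *\<^sub>C s)"
    by (rule sum.reindex_bij_betw[OF bij_betw_nth[OF onl_distinct[OF assms(1)] refl refl]])
  finally have eq: "w = (\<Sum>s\<in>set es. cinner s w *\<^sub>C s)" .
  show ?thesis unfolding cspan_def mem_Collect_eq
    by (rule exI[of _ "set es"], rule exI[of _ "\<lambda>s. cinner s w"]) (use eq in simp)
qed

lemma ext_exists:
  assumes inf: "infinite_dimensional TYPE('v::complex_inner_space)" and o: "onl (es :: 'v list)"
  shows "\<exists>e. onl (es @ [e])"
proof -
  have "cspan (set es) \<noteq> UNIV" using inf unfolding infinite_dimensional_def by blast
  then obtain w where w: "w \<notin> cspan (set es)" by blast
  obtain r where r: "onl (es @ r)" "inspan (es @ r) w" using gs_step[OF o] by blast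
  show ?thesis
  proof (cases r)
    case Nil thus ?thesis using r w inspan_cspan[OF o] by auto
  next
    case (Cons e r')
    hence "onl ((es @ [e]) @ r')" using r(1) by simp
    thus ?thesis by (intro exI[of _ e]) (rule onl_prefix)
  qed
qed

primrec esq :: "nat \<Rightarrow> 'v::complex_inner_space list" where
  "esq 0 = []"
| "esq (Suc n) = esq n @ [SOME e. onl (esq n @ [e])]"

lemma esq_onl:
  assumes "infinite_dimensional TYPE('v::complex_inner_space)"
  shows "onl (esq n :: 'v list)"
proof (induction n)
  case 0 thus ?case by (simp add: onl_def)
next
  case (Suc n)
  from someI_ex[OF ext_exists[OF assms Suc]] show ?case by simp
qed

lemma esq_len[simp]: "length (esq n) = n" by (induction n) auto

lemma esq_take: "n \<le> m \<Longrightarrow> esq n = take n (esq m)"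
proof (induction m)
  case 0 thus ?case by simp
next
  case (Suc m)
  show ?case
  proof (cases "n = Suc m")
    case True thus ?thesis by simp
  next
    case False
    hence "n \<le> m" using Suc.prems by simp
    thus ?thesis using Suc.IH by simp
  qed
qed

definition eseq :: "nat \<Rightarrow> 'v::complex_inner_space" where
  "eseq k = esq (Suc k) ! k"

lemma esq_nth: "k < n \<Longrightarrow> esq n ! k = eseq k"
proof -
  assume k: "k < n"
  have "esq (Suc k) = take (Suc k) (esq n)" using k by (intro esq_take) simp
  hence "esq (Suc k) ! k = take (Suc k) (esq n) ! k" by (rule arg_cong)
  also have "take (Suc k) (esq n) ! k = esq n ! k" by simp
  finally show ?thesis unfolding eseq_def by (rule sym)
qed

lemma eseq_on:
  assumes "infinite_dimensional TYPE('v::complex_inner_space)"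
  shows "cinner (eseq i :: 'v) (eseq j) = (if i = j then 1 else 0)"
proof -
  define n where "n = Suc (max i j)"
  have "onl (esq n :: 'v list)" by (rule esq_onl[OF assms])
  moreover have "i < n" "j < n" by (auto simp: n_def)
  ultimately show ?thesis unfolding onl_def using esq_nth[of i n] esq_nth[of j n] by (metis esq_len)
qed

lemma bessel_list:
  assumes o: "onl es"
  shows "(\<Sum>k<length es. (cmod (cinner (es!k) v))^2) \<le> (cnorm v)^2"
proof -
  define p where "p = proj es v"
  define X where "X = (\<Sum>k<length es. (cmod (cinner (es!k) v))^2)"
  have cc: "cinner (es!k) v * cnj (cinner (es!k) v) = complex_of_real ((cmod (cinner (es!k) v))^2)" for k
    using complex_norm_square[of "cinner (es!k) v"] by simp
  have vp: "cinner v p = complex_of_real X"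
  proof -
    have "cinner v p = (\<Sum>k<length es. cinner (es!k) v * cinner v (es!k))"
      unfolding p_def proj_def by (rule cinner_sum_scale_right)
    also have "\<dots> = (\<Sum>k<length es. complex_of_real ((cmod (cinner (es!k) v))^2))"
      by (intro sum.cong refl) (metis cc cinner_cnj_commute)
    finally show ?thesis by (simp add: X_def)
  qed
  have pp: "cinner p p = complex_of_real X"
  proof -
    have pdef: "p = (\<Sum>k<length es. cinner (es!k) v *\<^sub>C es!k)" by (simp add: p_def proj_def)
    have "cinner p p = cinner p (\<Sum>k<length es. cinner (es!k) v *\<^sub>C es!k)"
      by (simp only: pdef[symmetric])
    also have "\<dots> = (\<Sum>k<length es. cinner (es!k) v * cinner p (es!k))" by (rule cinner_sum_scale_right)
    also have "\<dots> = (\<Sum>k<length es. complex_of_real ((cmod (cinner (es!k) v))^2))"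
    proof (intro sum.cong refl)
      fix k assume k: "k \<in> {..<length es}"
      have "cinner p (es!k) = cnj (cinner (es!k) p)" by (rule cinner_cnj_commute)
      also have "cinner (es!k) p = cinner (es!k) v" unfolding p_def using o k by (simp add: proj_inner)
      finally show "cinner (es!k) v * cinner p (es!k) = complex_of_real ((cmod (cinner (es!k) v))^2)"
        using cc by simp
    qed
    finally show ?thesis by (simp add: X_def)
  qed
  have pv: "cinner p v = complex_of_real X" using vp cinner_cnj_commute[of p v] by simp
  have "cinner (v - p) (v - p) = cinner v v - complex_of_real X"
    by (simp add: cinner_diff_left cinner_diff_right vp pv pp)
  hence "Re (cinner (v - p) (v - p)) = (cnorm v)^2 - X" by (simp add: cinner_self_eq)
  thus ?thesis using cinner_ge_zero[of "v - p"] by (simp add: X_def)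
qed

lemma bessel_summable:
  assumes inf: "infinite_dimensional TYPE('v::complex_inner_space)"
  shows "summable (\<lambda>k. (cmod (cinner (eseq k :: 'v) v))^2)"
proof (rule summableI_nonneg_bounded)
  fix n
  have "onl (esq n :: 'v list)" by (rule esq_onl[OF inf])
  from bessel_list[OF this, of v]
  show "(\<Sum>k<n. (cmod (cinner (eseq k :: 'v) v))^2) \<le> (cnorm v)^2"
    by (simp add: esq_nth)
qed simp


definition Fgen :: "(nat \<Rightarrow> 'v::complex_inner_space sv) \<Rightarrow> 'v list \<Rightarrow> complex" where
  "Fgen G xs = sv_ip [(1, xs)] (G (length xs))"

lemma sv_ip_single: "sv_ip [(c, xs)] \<phi> = (\<Sum>(d, ys)\<leftarrow>\<phi>. cnj c * d * mono_ip xs ys)"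
  by (simp add: sv_ip_def)

lemma mono_ip_lin1:
  "mono_ip ((a *\<^sub>C x + b *\<^sub>C y) # ws) ys = cnj a * mono_ip (x # ws) ys + cnj b * mono_ip (y # ws) ys"
  unfolding mono_ip_Cons
  by (simp add: cinner_add_left cinner_scaleC_left algebra_simps sum.distrib sum_distrib_left)

lemma Fgen_ad: "sv_antidual (Fgen G)"
proof (rule ad_intro)
  fix xs ys :: "'a list" assume m: "mset xs = mset ys"
  hence l: "length xs = length ys" by (metis size_mset)
  show "Fgen G xs = Fgen G ys"
    unfolding Fgen_def sv_ip_single l
    by (rule sl_cong) (auto simp: mono_ip_perm1[OF m])
next
  fix ws :: "'a list" and a b x y
  show "Fgen G ((a *\<^sub>C x + b *\<^sub>C y) # ws) = cnj a * Fgen G (x # ws) + cnj b * Fgen G (y # ws)"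
    unfolding Fgen_def sv_ip_single
    by (simp add: mono_ip_lin1 case_prod_unfold algebra_simps sum_list_addf sum_list_const_mult)
qed

lemma Fgen_eval: "hom n \<psi> \<Longrightarrow> sv_eval (Fgen G) \<psi> = sv_ip \<psi> (G n)"
  unfolding sv_eval_def sv_ip_def Fgen_def sv_ip_single hom_def
  by (rule sl_cong) (auto simp: sum_list_const_mult case_prod_unfold mult.assoc)

lemma Fgen_bound: "hom n \<psi> \<Longrightarrow> cmod (sv_eval (Fgen G) \<psi>) \<le> sv_norm (G n) * sv_norm \<psi>"
  using sv_cs[of \<psi> "G n"] by (simp add: Fgen_eval mult.commute)

lemma Fgen_fock:
  assumes "summable (\<lambda>n. (sv_norm (G n))^2)"
  shows "Fgen G \<in> fock"
proof -
  obtain C where "\<forall>\<psi>. cmod (sv_eval (Fgen G) \<psi>) \<le> C * sv_norm \<psi>"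
    using gen_bound[OF Fgen_bound sv_norm_ge0 assms] by blast
  thus ?thesis unfolding fock_def using Fgen_ad by blast
qed

lemma Fgen_ann: "annihilator v (Fgen G) = Fgen (\<lambda>n. ann v (G (Suc n)))"
proof (rule ext)
  fix xs
  have "annihilator v (Fgen G) xs = sv_ip (cre v [(1, xs)]) (G (Suc (length xs)))"
    by (simp add: annihilator_def Fgen_def cre_def)
  also have "\<dots> = sv_ip [(1, xs)] (ann v (G (Suc (length xs))))" by (rule sv_ip_cre_ann)
  finally show "annihilator v (Fgen G) xs = Fgen (\<lambda>n. ann v (G (Suc n))) xs" by (simp add: Fgen_def)
qed

lemma Fgen_cre: "creator v (Fgen G) = Fgen (\<lambda>n. cre v (G (n - 1)))"
proof (rule ext)
  fix xs
  have h: "hom (length xs - 1) (ann v [(1, xs)])" unfolding hom_def ann_def by auto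
  have "creator v (Fgen G) xs = sv_eval (creator v (Fgen G)) [(1, xs)]" by (simp add: sv_eval_def)
  also have "\<dots> = sv_eval (Fgen G) (ann v [(1, xs)])" by (rule sv_eval_ann[symmetric])
  also have "\<dots> = sv_ip (ann v [(1, xs)]) (G (length xs - 1))" by (rule Fgen_eval[OF h])
  also have "\<dots> = sv_ip [(1, xs)] (cre v (G (length xs - 1)))" by (rule sv_ip_ann_cre)
  finally show "creator v (Fgen G) xs = Fgen (\<lambda>n. cre v (G (n - 1))) xs" by (simp add: Fgen_def)
qed

lemma Fgen_lower:
  assumes F: "Fgen G \<in> fock" and h: "hom n (G n)"
  shows "sv_norm (G n) \<le> comp_norm (Fgen G) n"
proof (cases "sv_norm (G n) = 0")
  case True thus ?thesis using comp_norm_ge0[OF F] by simp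
next
  case False
  define s where "s = sv_norm (G n)"
  have s0: "s > 0" using False sv_norm_ge0[of "G n"] by (simp add: s_def)
  define \<psi> where "\<psi> = sc (complex_of_real (1 / s)) (G n)"
  have n1: "sv_norm \<psi> = 1" using s0 by (simp add: \<psi>_def sv_norm_sc s_def norm_divide)
  have "sv_eval (Fgen G) \<psi> = sv_ip \<psi> (G n)" unfolding \<psi>_def by (rule Fgen_eval[OF hom_sc[OF h]])
  also have "\<dots> = complex_of_real (1 / s) * complex_of_real (s^2)"
    unfolding \<psi>_def sv_ip_sc1 using sv_ip_self_real[of "G n"] sv_norm_sq[of "G n"] by (simp add: s_def)
  also have "\<dots> = complex_of_real s" using s0 by (simp add: power2_eq_square)
  finally have "cmod (sv_eval (Fgen G) \<psi>) = s" using s0 by simp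
  thus ?thesis using comp_norm_lower[OF F hom_sc[OF h] , of "complex_of_real (1 / s)"] n1
    by (simp add: \<psi>_def s_def)
qed


definition bt :: "nat \<Rightarrow> real" where
  "bt n = 1 / (real n * sqrt (fact n))"

definition Gc :: "nat \<Rightarrow> 'v::complex_inner_space sv" where
  "Gc n = [(complex_of_real (bt n), replicate n (eseq n))]"

lemma mono_rep:
  assumes "cinner e e = 1"
  shows "mono_ip (replicate n e) (replicate n e) = fact n"
proof -
  have one: "(\<Prod>j<n. cinner e (replicate n e ! p j)) = 1" if p: "p permutes {..<n}" for p
  proof (rule prod.neutral, rule ballI)
    fix j assume j: "j \<in> {..<n}"
    have "p j < n" using permutes_in_image[OF p, of j] j by simp
    thus "cinner e (replicate n e ! p j) = 1" using assms j by simp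
  qed
  have "mono_ip (replicate n e) (replicate n e) = (\<Sum>p\<in>{p. p permutes {..<n}}. \<Prod>j<n. cinner e (replicate n e ! p j))"
    unfolding mono_ip_def by simp
  also have "\<dots> = (\<Sum>p\<in>{p. p permutes {..<n}}. 1)"
    by (rule sum.cong[OF refl]) (simp add: one)
  also have "\<dots> = of_nat (card {p. p permutes {..<n}})" by simp
  also have "\<dots> = fact n" by (simp add: card_permutations)
  finally show ?thesis .
qed

lemma Gc_hom: "hom n (Gc n)" by (simp add: hom_def Gc_def)

lemma bt_sq: "(bt n)^2 * fact n = inverse (real n ^ 2)"
proof (cases "n = 0")
  case True thus ?thesis by (simp add: bt_def)
next
  case False
  have f: "(fact n :: real) > 0" by simp
  show ?thesis using False f
    by (simp add: bt_def power_divide power_mult_distrib real_sqrt_pow2 field_simps)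
qed

lemma sv_ip_rep: "sv_ip (replicate m (c, xs)) (replicate m (c, xs)) = of_nat m * (of_nat m * (cnj c * c * mono_ip xs xs))"
  by (simp add: sv_ip_def sum_list_replicate)

lemma Gc_norm:
  assumes inf: "infinite_dimensional TYPE('v::complex_inner_space)"
  shows "(sv_norm (Gc n :: 'v sv))^2 = inverse (real n ^ 2)"
proof -
  have ee: "cinner (eseq n :: 'v) (eseq n) = 1" using eseq_on[OF inf] by simp
  have "sv_ip (Gc n :: 'v sv) (Gc n) = complex_of_real ((bt n)^2 * fact n)"
    using sv_ip_rep[of 1 "complex_of_real (bt n)" "replicate n (eseq n :: 'v)"]
    by (simp add: Gc_def mono_rep[OF ee] power2_eq_square)
  hence eq: "sv_ip (Gc n :: 'v sv) (Gc n) = complex_of_real (inverse (real n ^ 2))" by (simp only: bt_sq)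
  show ?thesis by (simp only: sv_norm_sq eq Re_complex_of_real)
qed

lemma dl_rep: "j < m \<Longrightarrow> dl j (replicate m e) = replicate (m - 1) e"
  by (simp add: dl_def replicate_add[symmetric])

lemma ann_Gc: "ann v (Gc m) = replicate m (complex_of_real (bt m) * cinner v (eseq m), replicate (m - 1) (eseq m))"
proof -
  have "map (\<lambda>j. (complex_of_real (bt m) * cinner v (replicate m (eseq m) ! j), dl j (replicate m (eseq m)))) [0..<m]
      = map (\<lambda>j. (complex_of_real (bt m) * cinner v (eseq m), replicate (m - 1) (eseq m))) [0..<m]"
    by (rule map_cong) (auto simp: dl_rep)
  also have "\<dots> = replicate m (complex_of_real (bt m) * cinner v (eseq m), replicate (m - 1) (eseq m))"
    by (simp add: map_replicate_const)
  finally show ?thesis by (simp add: ann_def Gc_def)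
qed

lemma ann_Gc_norm:
  assumes inf: "infinite_dimensional TYPE('v::complex_inner_space)"
  shows "(sv_norm (ann v (Gc m :: 'v sv)))^2 \<le> (cmod (cinner (eseq m :: 'v) v))^2"
proof (cases m)
  case 0
  thus ?thesis by (simp add: ann_Gc sv_norm_sq)
next
  case (Suc k)
  have ee: "cinner (eseq m :: 'v) (eseq m) = 1" using eseq_on[OF inf] by simp
  define c where "c = complex_of_real (bt m) * cinner v (eseq m)"
  have cc: "cnj c * c = complex_of_real ((bt m)^2 * (cmod (cinner (eseq m) v))^2)"
  proof -
    have "cnj c * c = complex_of_real ((cmod c)^2)" using complex_norm_square[of c] by (simp add: mult.commute)
    moreover have "cmod c = \<bar>bt m\<bar> * cmod (cinner (eseq m) v)"
      unfolding c_def by (simp add: norm_mult cinner_cnj_commute[of v] del: complex_mod_cnj) (metis complex_mod_cnj)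
    ultimately show ?thesis by (simp add: power_mult_distrib)
  qed
  have "sv_ip (ann v (Gc m)) (ann v (Gc m)) =
        complex_of_real (real m * real m * ((bt m)^2 * (cmod (cinner (eseq m) v))^2) * fact k)"
  proof -
    have mk: "m - 1 = k" using Suc by simp
    show ?thesis unfolding ann_Gc c_def[symmetric] sv_ip_rep cc mk mono_rep[OF ee] by simp
  qed
  hence "(sv_norm (ann v (Gc m :: 'v sv)))^2 = (cmod (cinner (eseq m :: 'v) v))^2 * (real m * real m * (bt m)^2 * fact k)"
    unfolding sv_norm_sq by (simp add: algebra_simps)
  also have "real m * real m * (bt m)^2 * fact k \<le> 1"
  proof -
    have bt2: "(bt m)^2 = 1 / ((real m)^2 * fact m)"
      by (simp add: bt_def power_divide power_mult_distrib real_sqrt_pow2)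
    have m0: "real m > 0" using Suc by simp
    have "real m * real m * (bt m)^2 * fact k = fact k / fact m"
      unfolding bt2 using m0 by (simp add: field_simps power2_eq_square)
    also have "\<dots> \<le> 1" using Suc by (simp add: fact_mono)
    finally show ?thesis .
  qed
  hence "(cmod (cinner (eseq m :: 'v) v))^2 * (real m * real m * (bt m)^2 * fact k) \<le> (cmod (cinner (eseq m :: 'v) v))^2"
    by (simp add: mult_left_le)
  finally show ?thesis .
qed


lemma cre_norm_sq: "(sv_norm (cre v \<psi>))^2 = (sv_norm (ann v \<psi>))^2 + (cnorm v)^2 * (sv_norm \<psi>)^2"
  unfolding sv_norm_sq ccr by (simp add: cinner_self_eq)

lemma Phi_fock:
  assumes inf: "infinite_dimensional TYPE('v::complex_inner_space)"
  shows "(Fgen Gc :: 'v list \<Rightarrow> complex) \<in> fock"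
proof (rule Fgen_fock)
  show "summable (\<lambda>n. (sv_norm (Gc n :: 'v sv))^2)"
    unfolding Gc_norm[OF inf] using inverse_power_summable[of 2, where 'a=real] by simp
qed

lemma Phi_ann:
  assumes inf: "infinite_dimensional TYPE('v::complex_inner_space)"
  shows "annihilator v (Fgen Gc :: 'v list \<Rightarrow> complex) \<in> fock"
  unfolding Fgen_ann
proof (rule Fgen_fock)
  have s: "summable (\<lambda>n. (cmod (cinner (eseq (Suc n) :: 'v) v))^2)"
    using bessel_summable[OF inf, of v] summable_Suc_iff[of "\<lambda>k. (cmod (cinner (eseq k :: 'v) v))^2"] by simp
  show "summable (\<lambda>n. (sv_norm (ann v (Gc (Suc n) :: 'v sv)))^2)"
    by (rule summable_comparison_test'[OF s, of 0]) (simp add: ann_Gc_norm[OF inf])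
qed

lemma Phi_cre:
  assumes inf: "infinite_dimensional TYPE('v::complex_inner_space)"
  shows "creator v (Fgen Gc :: 'v list \<Rightarrow> complex) \<in> fock"
  unfolding Fgen_cre
proof (rule Fgen_fock)
  define g where "g n = (cmod (cinner (eseq (n - 1) :: 'v) v))^2 + (cnorm v)^2 * inverse (real (n - 1) ^ 2)" for n
  have "summable (\<lambda>n. g (Suc n))"
    unfolding g_def using bessel_summable[OF inf, of v] inverse_power_summable[of 2, where 'a=real]
    by (auto intro!: summable_add summable_mult)
  hence s: "summable g" using summable_Suc_iff[of g] by simp
  show "summable (\<lambda>n. (sv_norm (cre v (Gc (n - 1) :: 'v sv)))^2)"
  proof (rule summable_comparison_test'[OF s, of 0])
    fix n :: nat
    have "(sv_norm (cre v (Gc (n - 1) :: 'v sv)))^2 \<le> g n"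
      unfolding cre_norm_sq g_def Gc_norm[OF inf] using ann_Gc_norm[OF inf, of v "n - 1"] by simp
    thus "norm ((sv_norm (cre v (Gc (n - 1) :: 'v sv)))^2) \<le> g n" by simp
  qed
qed

lemma Phi_notN:
  assumes inf: "infinite_dimensional TYPE('v::complex_inner_space)"
  shows "(Fgen Gc :: 'v list \<Rightarrow> complex) \<notin> dom_N_half"
proof
  assume "(Fgen Gc :: 'v list \<Rightarrow> complex) \<in> dom_N_half"
  hence sm: "summable (\<lambda>n. real n * (comp_norm (Fgen Gc :: 'v list \<Rightarrow> complex) n)^2)"
    by (simp add: dom_N_half_def)
  have F: "(Fgen Gc :: 'v list \<Rightarrow> complex) \<in> fock" by (rule Phi_fock[OF inf])
  have "summable (\<lambda>n. inverse (real n))"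
  proof (rule summable_comparison_test'[OF sm, of 0])
    fix n :: nat
    have le: "sv_norm (Gc n :: 'v sv) \<le> comp_norm (Fgen Gc :: 'v list \<Rightarrow> complex) n"
      by (rule Fgen_lower[OF F Gc_hom])
    have "(sv_norm (Gc n :: 'v sv))^2 \<le> (comp_norm (Fgen Gc :: 'v list \<Rightarrow> complex) n)^2"
      by (rule power_mono[OF le sv_norm_ge0])
    hence "real n * (sv_norm (Gc n :: 'v sv))^2 \<le> real n * (comp_norm (Fgen Gc :: 'v list \<Rightarrow> complex) n)^2"
      by (simp add: mult_left_mono)
    moreover have "real n * (sv_norm (Gc n :: 'v sv))^2 = inverse (real n)"
      unfolding Gc_norm[OF inf] by (cases "n = 0") (simp_all add: power2_eq_square)
    ultimately show "norm (inverse (real n)) \<le> real n * (comp_norm (Fgen Gc :: 'v list \<Rightarrow> complex) n)^2"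
      by simp
  qed
  thus False using not_summable_harmonic[where 'a=real] by simp
qed

theorem theorem3:
  assumes "infinite_dimensional TYPE('v::complex_hilbert_space)"
  shows "(dom_N_half :: ('v list \<Rightarrow> complex) set)
           \<subset> (\<Inter>v::'v. dom_creator v \<inter> dom_annihilator v)"
proof
  show "(dom_N_half :: ('v list \<Rightarrow> complex) set) \<subseteq> (\<Inter>v::'v. dom_creator v \<inter> dom_annihilator v)"
    using dir1 by blast
  have F: "(Fgen Gc :: 'v list \<Rightarrow> complex) \<in> fock" by (rule Phi_fock[OF assms])
  have "(Fgen Gc :: 'v list \<Rightarrow> complex) \<in> (\<Inter>v::'v. dom_creator v \<inter> dom_annihilator v)"
    using F Phi_cre[OF assms] Phi_ann[OF assms] by (auto simp: dom_creator_def dom_annihilator_def)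
  thus "(dom_N_half :: ('v list \<Rightarrow> complex) set) \<noteq> (\<Inter>v::'v. dom_creator v \<inter> dom_annihilator v)"
    using Phi_notN[OF assms] by blast
qed


end
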